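(* Assume Assumption A holds and $\alpha\in W^{3,\infty}(0,T)$, and let $u$ be the solution of problem (P) (assumed regular enough that the quantities below are defined). Let $0\le\varepsilon\ll1$. Then there exists a constant $Q=Q(\varepsilon,\|\alpha\|_{W^{3,\infty}(0,T)},T)$ such that for $v=u$ or $v=\Delta u$, with $v_0:=v(\cdot,0)$, and for $0<t\le T$, $$\Big|\partial_t I^{(1-\varepsilon)}\partial_t\big(\zeta(k*\Delta v)\big)(\bm x,t)\Big|\le Q\int_0^t\frac{|\partial_s\Delta v(\bm x,s)|}{(t-s)^{\varepsilon}}\,ds+\frac{Q\,|\Delta v_0(\bm x)|}{t^{\varepsilon}}.$$
   Context: Setting: $\Omega\subset\mathbb R^d$ ($1\le d\le3$) bounded smooth domain, $T>0$, $\mu,\zeta>0$, $k(t)=t^{\alpha(t)-1}/\Gamma(\alpha(t))$, $(k*\varphi)(t)=\int_0^tk(t-s)\varphi(s)ds$. Problem (P): $\partial_t u-\mu\Delta u-\zeta(k*\Delta u)=f$ in $\Omega\times(0,T]$, $u(\cdot,0)=u_0$, $u=0$ on $\partial\Omega\times(0,T]$. For a constant $0<\beta\le1$, $I^{(\beta)}\varphi(t)=\frac{1}{\Gamma(\beta)}\int_0^t(t-s)^{\beta-1}\varphi(s)ds$ is the Riemann–Liouville fractional integral (with $I^{(1)}$ the ordinary integral). Assumption A: (i) $0<\alpha_*\le\alpha(t)\le1$ on $[0,T]$, $\alpha(0)=1$, $|\alpha'|,|\alpha''|\le Q$ on $[0,T]$; (ii) $f\in L^p(0,T;L^2(\Omega))$,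 $\Delta u_0\in L^2(\Omega)$. *)

theory Defs
  imports "HOL-Analysis.Analysis"
begin

definition vo_kernel :: "(real \<Rightarrow> real) \<Rightarrow> real \<Rightarrow> real" where
  "vo_kernel \<alpha> t = t powr (\<alpha> t - 1) / Gamma (\<alpha> t)"

definition kconv :: "(real \<Rightarrow> real) \<Rightarrow> (real \<Rightarrow> real) \<Rightarrow> real \<Rightarrow> real" where
  "kconv \<alpha> \<phi> t = integral {0..t} (\<lambda>s. vo_kernel \<alpha> (t - s) * \<phi> s)"

definition RL_int :: "real \<Rightarrow> (real \<Rightarrow> real) \<Rightarrow> real \<Rightarrow> real" where
  "RL_int \<beta> \<phi> t = (1 / Gamma \<beta>) * integral {0..t} (\<lambda>s. (t - s) powr (\<beta> - 1) * \<phi> s)"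

definition laplacian :: "(real^'n \<Rightarrow> real) \<Rightarrow> real^'n \<Rightarrow> real" where
  "laplacian g x = (\<Sum>i\<in>UNIV. deriv (deriv (\<lambda>b. g (x + b *\<^sub>R axis i 1))) 0)"

end

theory Submission
  imports Defs
begin


lemma refl_has_integral:
  fixes f :: "real \<Rightarrow> real"
  shows "((\<lambda>s. f (r - s)) has_integral I) {0..r} \<longleftrightarrow> (f has_integral I) {0..r}"
proof -
  have "(f has_integral I) {0..r} \<longleftrightarrow> ((\<lambda>x. f (x + r)) has_integral I) {0-r..r-r}"
    by (rule has_integral_shift_real_ivl_iff)
  also have "\<dots> \<longleftrightarrow> ((\<lambda>x. f (-x + r)) has_integral I) {-(r-r)..-(0-r)}"
    by (rule has_integral_reflect_real[symmetric, where f="\<lambda>x. f (x + r)"])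
  finally show ?thesis by (simp add: algebra_simps)
qed

lemma refl_integrable:
  fixes f :: "real \<Rightarrow> real"
  shows "(\<lambda>s. f (r - s)) integrable_on {0..r} \<longleftrightarrow> f integrable_on {0..r}"
  using refl_has_integral unfolding integrable_on_def by blast

lemma refl_integral:
  fixes f :: "real \<Rightarrow> real"
  shows "integral {0..r} (\<lambda>s. f (r - s)) = integral {0..r} f"
proof (cases "f integrable_on {0..r}")
  case True
  then show ?thesis using refl_has_integral integral_unique by (metis has_integral_integral)
next
  case False
  then show ?thesis using refl_integrable by (metis not_integrable_integral)
qed

lemma powr_has_int:
  fixes p r :: real
  assumes "0 \<le> p" "p < 1" "0 \<le> r"
  shows "((\<lambda>s. s powr (-p)) has_integral r powr (1-p)/(1-p)) {0..r}"
  using has_integral_powr_from_0[of "-p" r] assms by simp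

lemma powr_refl_has_int:
  fixes p r :: real
  assumes "0 \<le> p" "p < 1" "0 \<le> r"
  shows "((\<lambda>s. (r - s) powr (-p)) has_integral r powr (1-p)/(1-p)) {0..r}"
  using powr_has_int[OF assms] refl_has_integral[of "\<lambda>s. s powr (-p)"] by simp

lemma int1:
  fixes g :: "real \<Rightarrow> real" and p r :: real
  assumes g: "continuous_on {0..r} g" and p: "0 \<le> p" "p < 1" and r: "0 \<le> r"
  shows "(\<lambda>s. s powr (-p) * g s) absolutely_integrable_on {0..r}"
proof -
  obtain M where M: "\<And>s. s \<in> {0..r} \<Longrightarrow> norm (g s) \<le> M"
    using compact_imp_bounded[OF compact_continuous_image[OF g compact_Icc]]
    by (fastforce simp: bounded_iff)
  show ?thesis
  proof (rule measurable_bounded_by_integrable_imp_absolutely_integrable)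
    have m1: "(\<lambda>s. s powr (-p)) \<in> borel_measurable (lebesgue_on {0..r})"
      by (intro measurable_restrict_space1 measurable_completion) (simp add: measurable_lborel1)
    show "(\<lambda>s. s powr (-p) * g s) \<in> borel_measurable (lebesgue_on {0..r})"
      using m1 continuous_imp_measurable_on_sets_lebesgue[OF g] by (intro borel_measurable_times) auto
    show "{0..r} \<in> sets lebesgue" by simp
    show "(\<lambda>s. M * s powr (-p)) integrable_on {0..r}"
      using powr_has_int[OF p r] by (intro integrable_on_mult_right) (auto simp: integrable_on_def)
    show "norm (s powr (-p) * g s) \<le> M * s powr (-p)" if "s \<in> {0..r}" for s
      using M[OF that] by (simp add: abs_mult mult.commute mult_right_mono)
  qed
qed


lemma leftq:
  fixes f :: "real \<Rightarrow> real"
  assumes der: "(f has_real_derivative D) (at t within {0..T})" and t: "0 < t" "t \<le> T"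
  shows "((\<lambda>h. (f t - f (t - h)) / h) \<longlongrightarrow> D) (at_right 0)"
proof -
  have 1: "((\<lambda>y. (f y - f t) / (y - t)) \<longlongrightarrow> D) (at t within {0..T})"
    using der by (simp add: has_field_derivative_iff)
  have 2: "filterlim (\<lambda>h. t - h) (at t within {0..T}) (at_right 0)"
  proof (rule filterlim_at_withinI)
    show "((\<lambda>h. t - h) \<longlongrightarrow> t) (at_right 0)"
      by (rule tendsto_eq_intros | simp)+
    have "eventually (\<lambda>h. h < t) (at_right (0::real))"
      using t(1) by (auto simp: eventually_at_right[OF t(1)])
    moreover have "eventually (\<lambda>h. 0 < h) (at_right (0::real))"
      by (simp add: eventually_at_right_less)
    ultimately show "eventually (\<lambda>h. t - h \<in> {0..T} - {t}) (at_right 0)"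
      by eventually_elim (use t in auto)
  qed
  have "((\<lambda>h. (f (t - h) - f t) / ((t - h) - t)) \<longlongrightarrow> D) (at_right 0)"
    using filterlim_compose[OF 1 2] by (simp add: o_def)
  then show ?thesis
    by (rule Lim_transform_eventually) (auto simp: divide_simps intro!: eventually_mono[OF eventually_at_right_less])
qed

lemma cont_refl:
  fixes g :: "real \<Rightarrow> real"
  assumes "continuous_on {0..T} g" "0 \<le> c - b" "c - a \<le> T"
  shows "continuous_on {a..b} (\<lambda>\<sigma>. g (c - \<sigma>))"
  by (rule continuous_on_compose2[OF assms(1)]) (use assms in \<open>auto intro!: continuous_intros\<close>)

lemma tendsto_by_le:
  fixes f :: "real \<Rightarrow> real"
  assumes "\<And>e. 0 < e \<Longrightarrow> eventually (\<lambda>h. \<bar>f h - V\<bar> \<le> e) F"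
  shows "(f \<longlongrightarrow> V) F"
proof (rule tendstoI)
  fix e :: real assume "0 < e"
  then have "eventually (\<lambda>h. \<bar>f h - V\<bar> \<le> e/2) F" using assms[of "e/2"] by simp
  then show "eventually (\<lambda>h. dist (f h) V < e) F"
    by eventually_elim (use \<open>0<e\<close> in \<open>auto simp: dist_real_def\<close>)
qed

locale S0 =
  fixes T \<epsilon> Mk Ck :: real and \<kappa> w \<phi> :: "real \<Rightarrow> real"
  assumes T_pos: "0 < T" and eps0: "0 \<le> \<epsilon>" and eps1: "\<epsilon> \<le> 1/4"
    and k_cont: "continuous_on {0..T} \<kappa>"
    and k_bnd: "\<And>s. s \<in> {0..T} \<Longrightarrow> \<bar>\<kappa> s\<bar> \<le> Mk"
    and k_lip: "\<And>x y. 0 < y \<Longrightarrow> y \<le> x \<Longrightarrow> x \<le> T \<Longrightarrow> \<bar>\<kappa> x - \<kappa> y\<bar> \<le> Ck * (x - y) * y powr (-1/2)"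
    and Ck: "0 \<le> Ck"
    and phi_cont: "continuous_on {0..T} \<phi>"
    and w_der: "\<And>s. s \<in> {0..T} \<Longrightarrow> (w has_real_derivative \<phi> s) (at s within {0..T})"
begin

definition "\<psi> x = integral {0..x} (\<lambda>u. \<kappa> (x - u) * \<phi> u)"

lemma Mk: "0 \<le> Mk" using k_bnd[of 0] T_pos by auto

lemma phi_bnd: obtains Mp where "0 \<le> Mp" "\<And>s. s \<in> {0..T} \<Longrightarrow> \<bar>\<phi> s\<bar> \<le> Mp"
proof -
  obtain M where M: "\<And>s. s \<in> {0..T} \<Longrightarrow> norm (\<phi> s) \<le> M"
    using compact_imp_bounded[OF compact_continuous_image[OF phi_cont compact_Icc]]
    by (fastforce simp: bounded_iff)
  show ?thesis using M M[of 0] T_pos by (intro that[of M]) force+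
qed

lemma w_cont: "continuous_on {0..T} w"
  using w_der by (meson DERIV_continuous continuous_on_eq_continuous_within)

lemma w_mvt:
  assumes "e > 0"
  shows "\<exists>\<delta>>0. \<forall>x h. 0 < h \<longrightarrow> h < \<delta> \<longrightarrow> h \<le> x \<longrightarrow> x \<le> T \<longrightarrow> \<bar>w x - w (x - h) - h * \<phi> x\<bar> \<le> e * h"
proof -
  have "uniformly_continuous_on {0..T} \<phi>" by (rule compact_uniformly_continuous[OF phi_cont compact_Icc])
  then obtain d where d: "d > 0" "\<And>x y. x \<in> {0..T} \<Longrightarrow> y \<in> {0..T} \<Longrightarrow> dist y x < d \<Longrightarrow> dist (\<phi> y) (\<phi> x) < e"
    unfolding uniformly_continuous_on_def using assms by metis
  show ?thesis
  proof (intro exI[of _ d] conjI allI impI)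
    fix x h assume h: "0 < h" "h < d" "h \<le> x" "x \<le> T"
    have "norm ((\<lambda>y. w y - \<phi> x * y) x - (\<lambda>y. w y - \<phi> x * y) (x - h)) \<le> e * norm (x - (x - h))"
    proof (rule field_differentiable_bound[where S="{x-h..x}" and f'="\<lambda>y. \<phi> y - \<phi> x"])
      show "convex {x-h..x}" by simp
      fix z assume z: "z \<in> {x-h..x}"
      have "(w has_real_derivative \<phi> z) (at z within {x-h..x})"
        using DERIV_subset[OF w_der[of z]] z h by auto
      then show "((\<lambda>y. w y - \<phi> x * y) has_field_derivative \<phi> z - \<phi> x) (at z within {x-h..x})"
        by (auto intro!: derivative_eq_intros)
      show "norm (\<phi> z - \<phi> x) \<le> e"
        using d(2)[of x z] z h by (auto simp: dist_real_def)
    qed (use h in auto)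
    then show "\<bar>w x - w (x - h) - h * \<phi> x\<bar> \<le> e * h" using h by (simp add: algebra_simps)
  qed (rule d)
qed

end


lemma int_bound_Icc:
  fixes f :: "real \<Rightarrow> real"
  assumes "0 \<le> B" "f integrable_on {a..b}" "\<And>x. x \<in> {a..b} \<Longrightarrow> \<bar>f x\<bar> \<le> B" "a \<le> b"
  shows "\<bar>integral {a..b} f\<bar> \<le> B * (b - a)"
  using has_integral_bound[of B f "integral {a..b} f" a b] assms by (auto simp: has_integral_integral)
context S0 begin

lemma D1_formula:
  fixes K :: "real \<Rightarrow> real" and \<zeta> D r :: real
  assumes r: "0 < r" "r \<le> T"
    and K: "\<And>s. 0 < s \<Longrightarrow> s \<le> T \<Longrightarrow> K s = \<kappa> s"
    and der: "((\<lambda>r. \<zeta> * integral {0..r} (\<lambda>s. K (r - s) * w s)) has_real_derivative D) (at r within {0..T})"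
  shows "D = \<zeta> * (\<kappa> r * w 0 + \<psi> r)"
proof -
  define Q where "Q x = integral {0..x} (\<lambda>\<sigma>. \<kappa> \<sigma> * w (x - \<sigma>))" for x
  have QK: "integral {0..x} (\<lambda>s. K (x - s) * w s) = Q x" if "0 \<le> x" "x \<le> T" for x
  proof -
    have "integral {0..x} (\<lambda>s. K (x - s) * w s) = integral {0..x} (\<lambda>\<sigma>. K \<sigma> * w (x - \<sigma>))"
      using refl_integral[where f="\<lambda>\<sigma>. K \<sigma> * w (x - \<sigma>)" and r=x] by simp
    also have "\<dots> = Q x" unfolding Q_def
      by (rule integral_spike[of "{0}"]) (use that K in auto)
    finally show ?thesis .
  qed
  define f1 where "f1 \<sigma> = \<kappa> \<sigma> * w (r - \<sigma>)" for \<sigma>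
  define f3 where "f3 \<sigma> = \<kappa> \<sigma> * \<phi> (r - \<sigma>)" for \<sigma>
  define V where "V = \<kappa> r * w 0 + integral {0..r} f3"
  have V: "V = \<kappa> r * w 0 + \<psi> r"
    unfolding V_def \<psi>_def f3_def using refl_integral[where f="\<lambda>\<sigma>. \<kappa> \<sigma> * \<phi> (r - \<sigma>)" and r=r] by simp
  have kc: "continuous_on {0..r} \<kappa>" using continuous_on_subset[OF k_cont] r by auto
  have c1: "continuous_on {0..r} f1" unfolding f1_def
    by (intro continuous_intros kc cont_refl[OF w_cont]) (use r in auto)
  have c3: "continuous_on {0..r} f3" unfolding f3_def
    by (intro continuous_intros kc cont_refl[OF phi_cont]) (use r in auto)
  obtain Mp where Mp: "0 \<le> Mp" "\<And>s. s \<in> {0..T} \<Longrightarrow> \<bar>\<phi> s\<bar> \<le> Mp" using phi_bnd by blast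
  have L2: "((\<lambda>h. (Q r - Q (r - h)) / h) \<longlongrightarrow> V) (at_right 0)"
  proof (rule tendsto_by_le)
    fix e :: real assume e: "0 < e"
    define e' where "e' = e / (3 + Mk * r)"
    have e': "0 < e'" using e Mk r by (simp add: e'_def add_pos_nonneg)
    have "uniformly_continuous_on {0..r} f1" by (rule compact_uniformly_continuous[OF c1 compact_Icc])
    then obtain d1 where d1: "d1 > 0" "\<And>x y. x \<in> {0..r} \<Longrightarrow> y \<in> {0..r} \<Longrightarrow> dist y x < d1 \<Longrightarrow> dist (f1 y) (f1 x) < e'"
      unfolding uniformly_continuous_on_def using e' by metis
    obtain d2 where d2: "d2 > 0" "\<And>x h. 0 < h \<Longrightarrow> h < d2 \<Longrightarrow> h \<le> x \<Longrightarrow> x \<le> T \<Longrightarrow> \<bar>w x - w (x - h) - h * \<phi> x\<bar> \<le> e' * h"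
      using w_mvt[OF e'] by blast
    define d3 where "d3 = e' / (Mk * Mp + 1)"
    have d3: "0 < d3" using e' Mk Mp by (simp add: d3_def add_nonneg_pos)
    have ev: "eventually (\<lambda>h. 0 < h \<and> h < min (min d1 d2) (min d3 r)) (at_right (0::real))"
    proof -
      have "0 < min (min d1 d2) (min d3 r)" using d1 d2 d3 r by auto
      then show ?thesis
        by (intro eventually_conj eventually_at_right_less) (auto simp: eventually_at_right[of 0] intro!: exI[of _ "min (min d1 d2) (min d3 r)"])
    qed
    show "eventually (\<lambda>h. \<bar>(Q r - Q (r - h)) / h - V\<bar> \<le> e) (at_right 0)"
      using ev
    proof eventually_elim
      case (elim h)
      then have h: "0 < h" "h < d1" "h < d2" "h < d3" "h < r" by auto
      have i1: "f1 integrable_on {0..r}" by (rule integrable_continuous_interval[OF c1])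
      have i3: "f3 integrable_on {0..r}" by (rule integrable_continuous_interval[OF c3])
      define f2 where "f2 \<sigma> = \<kappa> \<sigma> * w (r - h - \<sigma>)" for \<sigma>
      have c2: "continuous_on {0..r-h} f2" unfolding f2_def
        by (intro continuous_intros continuous_on_subset[OF kc] cont_refl[OF w_cont]) (use r h in auto)
      have i2: "f2 integrable_on {0..r-h}" by (rule integrable_continuous_interval[OF c2])
      have i1a: "f1 integrable_on {0..r-h}" "f1 integrable_on {r-h..r}"
        using i1 h by (auto intro: integrable_subinterval_real)
      have i3a: "f3 integrable_on {0..r-h}" "f3 integrable_on {r-h..r}"
        using i3 h by (auto intro: integrable_subinterval_real)
      have Qr: "Q r = integral {0..r-h} f1 + integral {r-h..r} f1"
        unfolding Q_def f1_def[symmetric] using Henstock_Kurzweil_Integration.integral_combine[OF _ _ i1, of "r-h"] h by simp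
      have Qrh: "Q (r - h) = integral {0..r-h} f2"
        unfolding Q_def f2_def by simp
      have I3: "integral {0..r} f3 = integral {0..r-h} f3 + integral {r-h..r} f3"
        using Henstock_Kurzweil_Integration.integral_combine[OF _ _ i3, of "r-h"] h by simp
      define A where "A = integral {r-h..r} (\<lambda>\<sigma>. f1 \<sigma> - \<kappa> r * w 0)"
      define B where "B = integral {0..r-h} (\<lambda>\<sigma>. f1 \<sigma> - f2 \<sigma> - h * f3 \<sigma>)"
      define C where "C = integral {r-h..r} f3"
      have A: "A = integral {r-h..r} f1 - h * (\<kappa> r * w 0)"
        unfolding A_def using h i1a by (subst integral_diff) auto
      have B: "B = integral {0..r-h} f1 - integral {0..r-h} f2 - h * integral {0..r-h} f3"
        unfolding B_def using i1a i2 i3a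
        by (simp add: integral_diff integrable_diff integral_mult_right integrable_on_mult_right)
      have eq: "(Q r - Q (r - h)) / h - V = A / h + B / h - C"
        unfolding Qr Qrh V_def I3 A B C_def using h by (simp add: field_simps)
      have bA: "\<bar>A\<bar> \<le> e' * h"
      proof -
        have "\<bar>A\<bar> \<le> e' * (r - (r - h))"
          unfolding A_def
        proof (rule int_bound_Icc)
          show "(\<lambda>\<sigma>. f1 \<sigma> - \<kappa> r * w 0) integrable_on {r - h..r}"
            using i1a(2) by (intro integrable_diff) auto
          fix x assume x: "x \<in> {r - h..r}"
          have "\<bar>f1 x - f1 r\<bar> < e'" using d1(2)[of r x] x h r by (auto simp: dist_real_def)
          then show "\<bar>f1 x - \<kappa> r * w 0\<bar> \<le> e'" by (simp add: f1_def)
        qed (use e' h in auto)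
        then show ?thesis using h by simp
      qed
      have bB: "\<bar>B\<bar> \<le> Mk * e' * h * r"
      proof -
        have "\<bar>B\<bar> \<le> (Mk * (e' * h)) * ((r - h) - 0)"
          unfolding B_def
        proof (rule int_bound_Icc)
          show "(\<lambda>\<sigma>. f1 \<sigma> - f2 \<sigma> - h * f3 \<sigma>) integrable_on {0..r - h}"
            using i1a i2 i3a by (auto intro!: integrable_diff integrable_on_mult_right)
          fix \<sigma> assume s: "\<sigma> \<in> {0..r - h}"
          have "f1 \<sigma> - f2 \<sigma> - h * f3 \<sigma> = \<kappa> \<sigma> * (w (r - \<sigma>) - w (r - \<sigma> - h) - h * \<phi> (r - \<sigma>))"
            unfolding f1_def f2_def f3_def by (simp add: algebra_simps)
          moreover have "\<bar>\<kappa> \<sigma>\<bar> \<le> Mk" using k_bnd s r h by auto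
          moreover have "\<bar>w (r - \<sigma>) - w (r - \<sigma> - h) - h * \<phi> (r - \<sigma>)\<bar> \<le> e' * h"
            using d2(2)[of h "r - \<sigma>"] s h r by auto
          ultimately show "\<bar>f1 \<sigma> - f2 \<sigma> - h * f3 \<sigma>\<bar> \<le> Mk * (e' * h)"
            by (simp add: abs_mult mult_mono')
        qed (use Mk e' h in auto)
        also have "\<dots> \<le> Mk * (e' * h) * r" using h r Mk e' by (intro mult_left_mono) auto
        finally show ?thesis by (simp add: mult.assoc)
      qed
      have bC: "\<bar>C\<bar> \<le> e'"
      proof -
        have "\<bar>C\<bar> \<le> (Mk * Mp) * (r - (r - h))"
          unfolding C_def
        proof (rule int_bound_Icc)
          show "f3 integrable_on {r - h..r}" using i3a by simp
          fix \<sigma> assume s: "\<sigma> \<in> {r - h..r}"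
          have "\<bar>\<kappa> \<sigma>\<bar> \<le> Mk" using k_bnd s r h by auto
          moreover have "\<bar>\<phi> (r - \<sigma>)\<bar> \<le> Mp" using Mp s r h by auto
          ultimately show "\<bar>f3 \<sigma>\<bar> \<le> Mk * Mp"
            unfolding f3_def by (simp add: abs_mult mult_mono' Mk)
        qed (use Mk Mp h in auto)
        then have "\<bar>C\<bar> \<le> Mk * Mp * h" using h by simp
        also have "\<dots> \<le> (Mk * Mp + 1) * d3" using h Mk Mp
          by (intro mult_mono) auto
        also have "\<dots> = e'"
        proof -
          have "Mk * Mp + 1 > 0" using Mk Mp by (simp add: add_nonneg_pos)
          then show ?thesis unfolding d3_def by simp
        qed
        finally show ?thesis .
      qed
      have "\<bar>(Q r - Q (r - h)) / h - V\<bar> \<le> \<bar>A\<bar> / h + \<bar>B\<bar> / h + \<bar>C\<bar>"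
      proof -
        have "\<bar>A/h\<bar> = \<bar>A\<bar>/h" "\<bar>B/h\<bar> = \<bar>B\<bar>/h" using h by simp_all
        then show ?thesis unfolding eq
          using abs_triangle_ineq[of "A/h" "B/h"] abs_triangle_ineq4[of "A/h+B/h" C] by linarith
      qed
      also have "\<dots> \<le> e' + Mk * e' * r + e'"
        using bA bB bC h by (intro add_mono) (auto simp: field_simps)
      also have "\<dots> = e' * (2 + Mk * r)" by (simp add: algebra_simps)
      also have "\<dots> \<le> e"
      proof -
        have p: "0 < 3 + Mk * r" using Mk r by (simp add: add_pos_nonneg)
        have "e' * (2 + Mk * r) \<le> e' * (3 + Mk * r)" using e' by simp
        also have "\<dots> = e" unfolding e'_def using p by simp
        finally show ?thesis .
      qed
      finally show ?case .
    qed
  qed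
  define G where "G x = \<zeta> * integral {0..x} (\<lambda>s. K (x - s) * w s)" for x
  have L1: "((\<lambda>h. (G r - G (r - h)) / h) \<longlongrightarrow> D) (at_right 0)"
    using leftq[OF der[folded G_def] r] .
  have "((\<lambda>h. \<zeta> * ((Q r - Q (r - h)) / h)) \<longlongrightarrow> \<zeta> * V) (at_right 0)"
    by (intro tendsto_mult_left L2)
  moreover have "eventually (\<lambda>h. \<zeta> * ((Q r - Q (r - h)) / h) = (G r - G (r - h)) / h) (at_right 0)"
    using eventually_at_right[of 0 r] r
    by (auto simp: G_def QK right_diff_distrib intro!: exI[of _ r])
  ultimately have "((\<lambda>h. (G r - G (r - h)) / h) \<longlongrightarrow> \<zeta> * V) (at_right 0)"
    by (rule Lim_transform_eventually)
  with L1 have "D = \<zeta> * V" by (intro tendsto_unique[OF trivial_limit_at_right_real])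
  then show ?thesis using V by simp
qed

end


lemma min_trick:
  fixes \<sigma> y \<epsilon> :: real
  assumes s: "0 < \<sigma>" "\<sigma> < y" and e: "0 \<le> \<epsilon>"
  shows "\<sigma> powr (-\<epsilon>) * (y - \<sigma>) powr (-1/2) \<le> \<sigma> powr (-(\<epsilon>+1/2)) + (y - \<sigma>) powr (-(\<epsilon>+1/2))"
proof (cases "\<sigma> \<le> y - \<sigma>")
  case True
  have "(y - \<sigma>) powr (-1/2) \<le> \<sigma> powr (-1/2)" using True s by (intro powr_mono2') auto
  then have "\<sigma> powr (-\<epsilon>) * (y - \<sigma>) powr (-1/2) \<le> \<sigma> powr (-\<epsilon>) * \<sigma> powr (-1/2)"
    by (intro mult_left_mono) auto
  also have "\<dots> = \<sigma> powr (-(\<epsilon>+1/2))" using s by (simp add: powr_add[symmetric])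
  finally show ?thesis using s by (smt (verit) powr_ge_zero)
next
  case False
  have "\<sigma> powr (-\<epsilon>) \<le> (y - \<sigma>) powr (-\<epsilon>)" using False s e by (intro powr_mono2') auto
  then have "\<sigma> powr (-\<epsilon>) * (y - \<sigma>) powr (-1/2) \<le> (y - \<sigma>) powr (-\<epsilon>) * (y - \<sigma>) powr (-1/2)"
    by (intro mult_right_mono) auto
  also have "\<dots> = (y - \<sigma>) powr (-(\<epsilon>+1/2))" using s by (simp add: powr_add[symmetric])
  finally show ?thesis using s by (smt (verit) powr_ge_zero)
qed

lemma two_powr_has_int:
  fixes p y :: real
  assumes "0 \<le> p" "p < 1" "0 \<le> y"
  shows "((\<lambda>\<sigma>. \<sigma> powr (-p) + (y - \<sigma>) powr (-p)) has_integral 2 * (y powr (1-p) / (1-p))) {0..y}"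
  using has_integral_add[OF powr_has_int[OF assms] powr_refl_has_int[OF assms]] by simp

lemma int_le_open:
  fixes f g :: "real \<Rightarrow> real"
  assumes "f integrable_on {a..b}" "g integrable_on {a..b}" "\<And>x. a < x \<Longrightarrow> x < b \<Longrightarrow> \<bar>f x\<bar> \<le> g x"
  shows "\<bar>integral {a..b} f\<bar> \<le> integral {a..b} g"
proof -
  have "norm (integral {a<..<b} f) \<le> integral {a<..<b} g"
    using assms by (intro integral_norm_bound_integral) (auto simp: integrable_on_open_interval_real)
  then show ?thesis by (simp add: integral_open_interval_real[symmetric])
qed

context S0 begin

definition "T1 x = integral {0..x} (\<lambda>\<sigma>. \<sigma> powr (-\<epsilon>) * \<kappa> (x - \<sigma>))"

lemma kappa_refl_cont: "0 \<le> x \<Longrightarrow> x \<le> T \<Longrightarrow> continuous_on {0..x} (\<lambda>\<sigma>. \<kappa> (x - \<sigma>))"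
  by (rule cont_refl[OF k_cont]) auto

lemma T1_lip:
  assumes y: "0 < y" "y \<le> x" "x \<le> T"
  shows "\<bar>T1 x - T1 y\<bar> \<le> (Mk + 8 * Ck * sqrt T) * (x - y) * y powr (-\<epsilon>)"
proof -
  have eps: "0 \<le> \<epsilon>" "\<epsilon> < 1" using eps0 eps1 by auto
  have ix: "(\<lambda>\<sigma>. \<sigma> powr (-\<epsilon>) * \<kappa> (x - \<sigma>)) integrable_on {0..x}"
    using int1[OF kappa_refl_cont eps] y by (auto intro: absolutely_integrable_on_def[THEN iffD1, THEN conjunct1] set_lebesgue_integral_eq_integral(1))
  have iy: "(\<lambda>\<sigma>. \<sigma> powr (-\<epsilon>) * \<kappa> (y - \<sigma>)) integrable_on {0..y}"
    using int1[OF kappa_refl_cont eps] y by (auto intro: set_lebesgue_integral_eq_integral(1))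
  have ixa: "(\<lambda>\<sigma>. \<sigma> powr (-\<epsilon>) * \<kappa> (x - \<sigma>)) integrable_on {0..y}"
    "(\<lambda>\<sigma>. \<sigma> powr (-\<epsilon>) * \<kappa> (x - \<sigma>)) integrable_on {y..x}"
    using ix y by (auto intro: integrable_subinterval_real)
  have split: "T1 x = integral {0..y} (\<lambda>\<sigma>. \<sigma> powr (-\<epsilon>) * \<kappa> (x - \<sigma>)) + integral {y..x} (\<lambda>\<sigma>. \<sigma> powr (-\<epsilon>) * \<kappa> (x - \<sigma>))"
    unfolding T1_def using Henstock_Kurzweil_Integration.integral_combine[OF _ _ ix, of y] y by simp
  define p where "p = \<epsilon> + 1/2"
  have p: "0 \<le> p" "p < 1" "1/4 \<le> 1 - p" using eps0 eps1 by (auto simp: p_def)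
  have Ia: "\<bar>integral {0..y} (\<lambda>\<sigma>. \<sigma> powr (-\<epsilon>) * (\<kappa> (x - \<sigma>) - \<kappa> (y - \<sigma>)))\<bar>
      \<le> integral {0..y} (\<lambda>\<sigma>. Ck * (x - y) * (\<sigma> powr (-p) + (y - \<sigma>) powr (-p)))"
  proof (rule int_le_open)
    show "(\<lambda>\<sigma>. \<sigma> powr (-\<epsilon>) * (\<kappa> (x - \<sigma>) - \<kappa> (y - \<sigma>))) integrable_on {0..y}"
      using integrable_diff[OF ixa(1) iy] by (simp add: algebra_simps)
    show "(\<lambda>\<sigma>. Ck * (x - y) * (\<sigma> powr (-p) + (y - \<sigma>) powr (-p))) integrable_on {0..y}"
      using two_powr_has_int[OF p(1,2), of y] y by (intro integrable_on_mult_right) (auto simp: integrable_on_def)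
    fix \<sigma> assume s: "0 < \<sigma>" "\<sigma> < y"
    have "\<bar>\<kappa> (x - \<sigma>) - \<kappa> (y - \<sigma>)\<bar> \<le> Ck * (x - y) * (y - \<sigma>) powr (-1/2)"
      using k_lip[of "y - \<sigma>" "x - \<sigma>"] s y by auto
    then have "\<bar>\<sigma> powr (-\<epsilon>) * (\<kappa> (x - \<sigma>) - \<kappa> (y - \<sigma>))\<bar> \<le> \<sigma> powr (-\<epsilon>) * (Ck * (x - y) * (y - \<sigma>) powr (-1/2))"
      by (simp add: abs_mult mult_left_mono)
    also have "\<dots> = Ck * (x - y) * (\<sigma> powr (-\<epsilon>) * (y - \<sigma>) powr (-1/2))" by simp
    also have "\<dots> \<le> Ck * (x - y) * (\<sigma> powr (-p) + (y - \<sigma>) powr (-p))"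
      using min_trick[OF s eps0] Ck y unfolding p_def by (intro mult_left_mono) auto
    finally show "\<bar>\<sigma> powr (-\<epsilon>) * (\<kappa> (x - \<sigma>) - \<kappa> (y - \<sigma>))\<bar> \<le> Ck * (x - y) * (\<sigma> powr (-p) + (y - \<sigma>) powr (-p))" .
  qed
  have Ia2: "integral {0..y} (\<lambda>\<sigma>. Ck * (x - y) * (\<sigma> powr (-p) + (y - \<sigma>) powr (-p))) = Ck * (x - y) * (2 * (y powr (1-p) / (1-p)))"
    using two_powr_has_int[OF p(1,2), of y] y by (simp add: integral_mult_right integral_unique)
  have Ia3: "2 * (y powr (1-p) / (1-p)) \<le> 8 * sqrt T * y powr (-\<epsilon>)"
  proof -
    have "y powr (1-p) = sqrt y * y powr (-\<epsilon>)" using y unfolding p_def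
      by (simp add: powr_add[symmetric] powr_half_sqrt[symmetric])
    also have "\<dots> \<le> sqrt T * y powr (-\<epsilon>)" using y by (intro mult_right_mono) auto
    finally have "y powr (1-p) \<le> sqrt T * y powr (-\<epsilon>)" .
    moreover have "2 / (1 - p) \<le> 8" using p by (simp add: field_simps)
    ultimately have "2 / (1-p) * y powr (1-p) \<le> 8 * (sqrt T * y powr (-\<epsilon>))"
      by (intro mult_mono) auto
    then show ?thesis by simp
  qed
  have Ib: "\<bar>integral {y..x} (\<lambda>\<sigma>. \<sigma> powr (-\<epsilon>) * \<kappa> (x - \<sigma>))\<bar> \<le> (Mk * y powr (-\<epsilon>)) * (x - y)"
  proof (rule int_bound_Icc)
    fix \<sigma> assume s: "\<sigma> \<in> {y..x}"
    have "\<sigma> powr (-\<epsilon>) \<le> y powr (-\<epsilon>)" using s y eps0 by (intro powr_mono2') auto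
    moreover have "\<bar>\<kappa> (x - \<sigma>)\<bar> \<le> Mk" using k_bnd[of "x - \<sigma>"] s y by auto
    ultimately have "\<sigma> powr (-\<epsilon>) * \<bar>\<kappa> (x - \<sigma>)\<bar> \<le> y powr (-\<epsilon>) * Mk"
      by (intro mult_mono) auto
    then show "\<bar>\<sigma> powr (-\<epsilon>) * \<kappa> (x - \<sigma>)\<bar> \<le> Mk * y powr (-\<epsilon>)"
      by (simp add: abs_mult mult.commute)
  qed (use ixa y Mk in auto)
  have "T1 x - T1 y = integral {0..y} (\<lambda>\<sigma>. \<sigma> powr (-\<epsilon>) * (\<kappa> (x - \<sigma>) - \<kappa> (y - \<sigma>))) + integral {y..x} (\<lambda>\<sigma>. \<sigma> powr (-\<epsilon>) * \<kappa> (x - \<sigma>))"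
    unfolding split using integral_diff[OF ixa(1) iy] unfolding T1_def by (simp add: algebra_simps)
  then have "\<bar>T1 x - T1 y\<bar> \<le> Ck * (x - y) * (2 * (y powr (1-p) / (1-p))) + (Mk * y powr (-\<epsilon>)) * (x - y)"
    using Ia Ia2 Ib by linarith
  also have "\<dots> \<le> Ck * (x - y) * (8 * sqrt T * y powr (-\<epsilon>)) + (Mk * y powr (-\<epsilon>)) * (x - y)"
    using Ia3 Ck y by (intro add_right_mono mult_left_mono) auto
  also have "\<dots> = (Mk + 8 * Ck * sqrt T) * (x - y) * y powr (-\<epsilon>)" by (simp add: algebra_simps)
  finally show ?thesis .
qed

end


context S0 begin

lemma phi_refl_cont: "0 \<le> x \<Longrightarrow> x \<le> T \<Longrightarrow> continuous_on {0..x} (\<lambda>\<sigma>. \<phi> (x - \<sigma>))"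
  by (rule cont_refl[OF phi_cont]) auto

lemma psi_int: "0 \<le> y \<Longrightarrow> y \<le> x \<Longrightarrow> x \<le> T \<Longrightarrow> (\<lambda>u. \<kappa> (x - u) * \<phi> u) integrable_on {0..y}"
  by (intro integrable_continuous_interval continuous_intros cont_refl[OF k_cont]
        continuous_on_subset[OF phi_cont]) auto

lemma psi_split:
  assumes "0 \<le> y" "y \<le> x" "x \<le> T"
  shows "\<psi> x - \<psi> y = integral {y..x} (\<lambda>u. \<kappa> (x - u) * \<phi> u) + integral {0..y} (\<lambda>u. (\<kappa> (x - u) - \<kappa> (y - u)) * \<phi> u)"
proof -
  have i: "(\<lambda>u. \<kappa> (x - u) * \<phi> u) integrable_on {0..x}" using psi_int assms by auto
  have "\<psi> x = integral {0..y} (\<lambda>u. \<kappa> (x - u) * \<phi> u) + integral {y..x} (\<lambda>u. \<kappa> (x - u) * \<phi> u)"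
    unfolding \<psi>_def using Henstock_Kurzweil_Integration.integral_combine[OF _ _ i, of y] assms by simp
  moreover have "integral {0..y} (\<lambda>u. (\<kappa> (x - u) - \<kappa> (y - u)) * \<phi> u) = integral {0..y} (\<lambda>u. \<kappa> (x - u) * \<phi> u) - \<psi> y"
    unfolding \<psi>_def using psi_int[of y x] psi_int[of y y] assms
    by (subst integral_diff[symmetric]) (auto simp: algebra_simps)
  ultimately show ?thesis by simp
qed

lemma psi_lip: "\<exists>L. \<forall>x y. 0 \<le> y \<longrightarrow> y \<le> x \<longrightarrow> x \<le> T \<longrightarrow> \<bar>\<psi> x - \<psi> y\<bar> \<le> L * (x - y)"
proof -
  obtain Mp where Mp: "0 \<le> Mp" "\<And>s. s \<in> {0..T} \<Longrightarrow> \<bar>\<phi> s\<bar> \<le> Mp" using phi_bnd by blast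
  show ?thesis
  proof (intro exI[of _ "Mp * (Mk + 2 * Ck * sqrt T)"] allI impI)
    fix x y :: real assume xy: "0 \<le> y" "y \<le> x" "x \<le> T"
    have a: "\<bar>integral {y..x} (\<lambda>u. \<kappa> (x - u) * \<phi> u)\<bar> \<le> (Mk * Mp) * (x - y)"
    proof (rule int_bound_Icc)
      show "(\<lambda>u. \<kappa> (x - u) * \<phi> u) integrable_on {y..x}"
        using psi_int[of x x] xy by (auto intro: integrable_subinterval_real)
      fix u assume u: "u \<in> {y..x}"
      have "\<bar>\<kappa> (x - u)\<bar> \<le> Mk" "\<bar>\<phi> u\<bar> \<le> Mp" using k_bnd[of "x-u"] Mp(2)[of u] u xy by auto
      then show "\<bar>\<kappa> (x - u) * \<phi> u\<bar> \<le> Mk * Mp" by (simp add: abs_mult mult_mono' Mk)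
    qed (use Mk Mp xy in auto)
    have b: "\<bar>integral {0..y} (\<lambda>u. (\<kappa> (x - u) - \<kappa> (y - u)) * \<phi> u)\<bar> \<le> Mp * (2 * Ck * sqrt T) * (x - y)"
    proof (cases "y = 0")
      case True then show ?thesis using Mp Ck xy by simp
    next
      case False
      then have y: "0 < y" using xy by auto
      have "\<bar>integral {0..y} (\<lambda>u. (\<kappa> (x - u) - \<kappa> (y - u)) * \<phi> u)\<bar> \<le> integral {0..y} (\<lambda>u. Mp * Ck * (x - y) * (y - u) powr (-(1/2)))"
      proof (rule int_le_open)
        show "(\<lambda>u. (\<kappa> (x - u) - \<kappa> (y - u)) * \<phi> u) integrable_on {0..y}"
          using integrable_diff[OF psi_int[of y x] psi_int[of y y]] xy by (simp add: algebra_simps)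
        show "(\<lambda>u. Mp * Ck * (x - y) * (y - u) powr (-(1/2))) integrable_on {0..y}"
          using powr_refl_has_int[of "1/2" y] y by (intro integrable_on_mult_right) (auto simp: integrable_on_def)
        fix u assume u: "0 < u" "u < y"
        have "\<bar>\<kappa> (x - u) - \<kappa> (y - u)\<bar> \<le> Ck * (x - y) * (y - u) powr (-1/2)"
          using k_lip[of "y - u" "x - u"] u xy by auto
        moreover have "\<bar>\<phi> u\<bar> \<le> Mp" using Mp(2)[of u] u xy by auto
        ultimately have "\<bar>\<kappa> (x - u) - \<kappa> (y - u)\<bar> * \<bar>\<phi> u\<bar> \<le> (Ck * (x - y) * (y - u) powr (-1/2)) * Mp"
          by (intro mult_mono) auto
        then show "\<bar>(\<kappa> (x - u) - \<kappa> (y - u)) * \<phi> u\<bar> \<le> Mp * Ck * (x - y) * (y - u) powr (-(1/2))"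
          using abs_mult[of "\<kappa> (x - u) - \<kappa> (y - u)" "\<phi> u"] by (simp add: mult_ac)
      qed
      also have "\<dots> = Mp * Ck * (x - y) * (2 * sqrt y)"
        using powr_refl_has_int[of "1/2" y] y by (simp add: integral_mult_right integral_unique powr_half_sqrt)
      also have "\<dots> \<le> Mp * Ck * (x - y) * (2 * sqrt T)"
        using Mp Ck xy by (intro mult_left_mono) auto
      finally show ?thesis by (simp add: algebra_simps)
    qed
    have "\<bar>\<psi> x - \<psi> y\<bar> \<le> (Mk * Mp) * (x - y) + Mp * (2 * Ck * sqrt T) * (x - y)"
      using psi_split[OF xy] a b by linarith
    then show "\<bar>\<psi> x - \<psi> y\<bar> \<le> Mp * (Mk + 2 * Ck * sqrt T) * (x - y)" by (simp add: algebra_simps)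
  qed
qed

lemma psi_cont: "continuous_on {0..T} \<psi>"
proof -
  obtain L where L: "\<And>x y. 0 \<le> y \<Longrightarrow> y \<le> x \<Longrightarrow> x \<le> T \<Longrightarrow> \<bar>\<psi> x - \<psi> y\<bar> \<le> L * (x - y)"
    using psi_lip by blast
  have "(max L 0)-lipschitz_on {0..T} \<psi>"
  proof (rule lipschitz_onI)
    fix x y assume xy: "x \<in> {0..T}" "y \<in> {0..T}"
    show "dist (\<psi> x) (\<psi> y) \<le> max L 0 * dist x y"
    proof (cases "y \<le> x")
      case True
      then have "\<bar>\<psi> x - \<psi> y\<bar> \<le> L * (x - y)" using L xy by auto
      also have "\<dots> \<le> max L 0 * (x - y)" using True by (intro mult_right_mono) auto
      finally show ?thesis using True by (simp add: dist_real_def)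
    next
      case False
      then have "\<bar>\<psi> y - \<psi> x\<bar> \<le> L * (y - x)" using L xy by auto
      also have "\<dots> \<le> max L 0 * (y - x)" using False by (intro mult_right_mono) auto
      finally show ?thesis using False by (simp add: dist_real_def abs_minus_commute)
    qed
  qed simp
  then show ?thesis by (rule lipschitz_on_continuous_on)
qed

lemma psi_bnd:
  assumes "0 \<le> x" "x \<le> T"
  shows "\<bar>\<psi> x\<bar> \<le> Mk * integral {0..x} (\<lambda>u. \<bar>\<phi> u\<bar>)"
proof -
  have ic: "continuous_on {0..x} \<phi>" using continuous_on_subset[OF phi_cont] assms by auto
  have "norm (\<psi> x) \<le> integral {0..x} (\<lambda>u. Mk * \<bar>\<phi> u\<bar>)"
    unfolding \<psi>_def
  proof (rule integral_norm_bound_integral)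
    show "(\<lambda>u. \<kappa> (x - u) * \<phi> u) integrable_on {0..x}" using psi_int[of x x] assms by auto
    show "(\<lambda>u. Mk * \<bar>\<phi> u\<bar>) integrable_on {0..x}"
      by (intro integrable_continuous_interval continuous_intros ic)
    fix u assume u: "u \<in> {0..x}"
    have "\<bar>\<kappa> (x - u)\<bar> \<le> Mk" using k_bnd[of "x-u"] u assms by auto
    then show "norm (\<kappa> (x - u) * \<phi> u) \<le> Mk * \<bar>\<phi> u\<bar>" by (simp add: abs_mult mult_right_mono)
  qed
  then show ?thesis by (simp add: integral_mult_right)
qed

definition "S x = integral {0..x} (\<lambda>\<sigma>. \<sigma> powr (-\<epsilon>) * \<psi> (x - \<sigma>))"

lemma F_formula:
  fixes \<zeta> :: real and D1 :: "real \<Rightarrow> real"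
  assumes r: "0 < r" "r \<le> T" and D1: "\<And>s. 0 < s \<Longrightarrow> s \<le> r \<Longrightarrow> D1 s = \<zeta> * (\<kappa> s * w 0 + \<psi> s)"
  shows "integral {0..r} (\<lambda>s. (r - s) powr (-\<epsilon>) * D1 s) = \<zeta> * (w 0 * T1 r + S r)"
proof -
  have eps: "0 \<le> \<epsilon>" "\<epsilon> < 1" using eps0 eps1 by auto
  have i1: "(\<lambda>\<sigma>. \<sigma> powr (-\<epsilon>) * \<kappa> (r - \<sigma>)) integrable_on {0..r}"
    using int1[OF kappa_refl_cont eps] r by (auto intro: set_lebesgue_integral_eq_integral(1))
  have i2: "(\<lambda>\<sigma>. \<sigma> powr (-\<epsilon>) * \<psi> (r - \<sigma>)) integrable_on {0..r}"
    using int1[OF cont_refl[OF psi_cont] eps] r by (auto intro: set_lebesgue_integral_eq_integral(1))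
  have j1: "(\<lambda>s. (r - s) powr (-\<epsilon>) * \<kappa> s) integrable_on {0..r}"
    using i1 refl_integrable[where f="\<lambda>\<sigma>. \<sigma> powr (-\<epsilon>) * \<kappa> (r - \<sigma>)" and r=r] by simp
  have j2: "(\<lambda>s. (r - s) powr (-\<epsilon>) * \<psi> s) integrable_on {0..r}"
    using i2 refl_integrable[where f="\<lambda>\<sigma>. \<sigma> powr (-\<epsilon>) * \<psi> (r - \<sigma>)" and r=r] by simp
  have "integral {0..r} (\<lambda>s. (r - s) powr (-\<epsilon>) * D1 s) =
        integral {0..r} (\<lambda>s. \<zeta> * w 0 * ((r - s) powr (-\<epsilon>) * \<kappa> s) + \<zeta> * ((r - s) powr (-\<epsilon>) * \<psi> s))"
    by (rule integral_spike[of "{0}"]) (use D1 in \<open>auto simp: algebra_simps\<close>)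
  also have "\<dots> = \<zeta> * w 0 * integral {0..r} (\<lambda>s. (r - s) powr (-\<epsilon>) * \<kappa> s) + \<zeta> * integral {0..r} (\<lambda>s. (r - s) powr (-\<epsilon>) * \<psi> s)"
    using j1 j2 by (simp add: integral_add integrable_on_mult_right integral_mult_right)
  also have "integral {0..r} (\<lambda>s. (r - s) powr (-\<epsilon>) * \<kappa> s) = T1 r"
    unfolding T1_def using refl_integral[where f="\<lambda>\<sigma>. \<sigma> powr (-\<epsilon>) * \<kappa> (r - \<sigma>)" and r=r] by simp
  also have "integral {0..r} (\<lambda>s. (r - s) powr (-\<epsilon>) * \<psi> s) = S r"
    unfolding S_def using refl_integral[where f="\<lambda>\<sigma>. \<sigma> powr (-\<epsilon>) * \<psi> (r - \<sigma>)" and r=r] by simp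
  finally show ?thesis by (simp add: algebra_simps)
qed

end


lemma HKNN:
  fixes f :: "real \<Rightarrow> real"
  assumes "f absolutely_integrable_on {a..b}"
  shows "ennreal \<bar>integral {a..b} f\<bar> \<le> (\<integral>\<^sup>+x. ennreal (indicator {a..b} x * \<bar>f x\<bar>) \<partial>lborel)"
proof -
  have i: "f integrable_on {a..b}" "(\<lambda>x. \<bar>f x\<bar>) integrable_on {a..b}"
    using assms by (auto simp: absolutely_integrable_on_def)
  have "\<bar>integral {a..b} f\<bar> \<le> integral {a..b} (\<lambda>x. \<bar>f x\<bar>)"
    using integral_norm_bound_integral[OF i] by simp
  moreover have "(\<integral>\<^sup>+x. ennreal (indicator {a..b} x * \<bar>f x\<bar>) \<partial>lborel) = ennreal (integral {a..b} (\<lambda>x. \<bar>f x\<bar>))"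
    by (rule nn_integral_has_integral_lebesgue) (use i in auto)
  ultimately show ?thesis by (simp add: ennreal_leI)
qed

lemma inner_nn:
  fixes \<epsilon> L :: real
  assumes e: "0 \<le> \<epsilon>" "\<epsilon> \<le> 1/4" and L: "0 \<le> L"
  shows "(\<integral>\<^sup>+\<sigma>. ennreal (indicator {0..L} \<sigma> * (\<sigma> powr (-\<epsilon>) * (L - \<sigma>) powr (-1/2))) \<partial>lborel)
     \<le> ennreal (2 * (L powr (1 - (\<epsilon>+1/2)) / (1 - (\<epsilon>+1/2))))"
proof -
  define p where "p = \<epsilon> + 1/2"
  have p: "0 \<le> p" "p < 1" using e by (auto simp: p_def)
  have "(\<integral>\<^sup>+\<sigma>. ennreal (indicator {0..L} \<sigma> * (\<sigma> powr (-\<epsilon>) * (L - \<sigma>) powr (-1/2))) \<partial>lborel)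
      \<le> (\<integral>\<^sup>+\<sigma>. ennreal (indicator {0..L} \<sigma> * (\<sigma> powr (-p) + (L - \<sigma>) powr (-p))) \<partial>lborel)"
  proof (rule nn_integral_mono)
    fix \<sigma> :: real
    show "ennreal (indicator {0..L} \<sigma> * (\<sigma> powr (-\<epsilon>) * (L - \<sigma>) powr (-1/2)))
       \<le> ennreal (indicator {0..L} \<sigma> * (\<sigma> powr (-p) + (L - \<sigma>) powr (-p)))"
    proof (cases "0 < \<sigma> \<and> \<sigma> < L")
      case True
      then show ?thesis using min_trick[of \<sigma> L \<epsilon>] e by (intro ennreal_leI) (auto simp: p_def)
    next
      case False
      then have "indicator {0..L} \<sigma> * (\<sigma> powr (-\<epsilon>) * (L - \<sigma>) powr (-1/2)) = (0::real)"
        by (cases "\<sigma> = 0"; cases "\<sigma> = L") (auto simp: indicator_def)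
      then show ?thesis by (metis ennreal_0 zero_le)
    qed
  qed
  also have "\<dots> = ennreal (2 * (L powr (1-p) / (1-p)))"
    by (rule nn_integral_has_integral_lebesgue) (use two_powr_has_int[OF p L] in auto)
  finally show ?thesis by (simp add: p_def)
qed

context S0 begin

definition "\<phi>h u = \<phi> (max 0 (min T u))"

lemma phih_cont: "continuous_on UNIV \<phi>h"
  unfolding \<phi>h_def
  by (rule continuous_on_compose2[OF phi_cont]) (use T_pos in \<open>auto intro!: continuous_intros\<close>)

lemma phih_meas[measurable]: "\<phi>h \<in> borel_measurable borel"
  by (rule borel_measurable_continuous_onI[OF phih_cont])

lemma phih_eq: "u \<in> {0..T} \<Longrightarrow> \<phi>h u = \<phi> u"
  by (auto simp: \<phi>h_def)

definition "J y = (\<integral>\<^sup>+u. ennreal (indicator {0..y} u * (y - u) powr (-1/2) * \<bar>\<phi>h u\<bar>) \<partial>lborel)"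

lemma psi_diff_nn:
  assumes h: "0 < h" "h \<le> x" "x \<le> T"
    and e: "\<And>u v. u \<in> {0..T} \<Longrightarrow> v \<in> {0..T} \<Longrightarrow> \<bar>u - v\<bar> \<le> h \<Longrightarrow> \<bar>\<phi> u - \<phi> v\<bar> \<le> e"
  shows "ennreal \<bar>\<psi> x - \<psi> (x - h)\<bar> \<le> ennreal (Mk * h * (\<bar>\<phi> x\<bar> + e)) + ennreal (Ck * h) * J (x - h)"
proof -
  have e0: "0 \<le> e" using e[of x x] h by auto
  define A1 where "A1 = integral {x-h..x} (\<lambda>u. \<kappa> (x - u) * \<phi> u)"
  define A2 where "A2 = integral {0..x-h} (\<lambda>u. (\<kappa> (x - u) - \<kappa> (x - h - u)) * \<phi> u)"
  have split: "\<psi> x - \<psi> (x - h) = A1 + A2" unfolding A1_def A2_def using psi_split[of "x-h" x] h by simp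
  have bA1: "\<bar>A1\<bar> \<le> (Mk * (\<bar>\<phi> x\<bar> + e)) * (x - (x - h))"
    unfolding A1_def
  proof (rule int_bound_Icc)
    show "(\<lambda>u. \<kappa> (x - u) * \<phi> u) integrable_on {x - h..x}"
      using psi_int[of x x] h by (auto intro: integrable_subinterval_real)
    fix u assume u: "u \<in> {x - h..x}"
    have "\<bar>\<kappa> (x - u)\<bar> \<le> Mk" using k_bnd[of "x-u"] u h by auto
    moreover have "\<bar>\<phi> u\<bar> \<le> \<bar>\<phi> x\<bar> + e" using e[of u x] u h by auto
    ultimately show "\<bar>\<kappa> (x - u) * \<phi> u\<bar> \<le> Mk * (\<bar>\<phi> x\<bar> + e)"
      by (simp add: abs_mult mult_mono')
  qed (use Mk e0 h in auto)
  have abs2: "(\<lambda>u. (\<kappa> (x - u) - \<kappa> (x - h - u)) * \<phi> u) absolutely_integrable_on {0..x-h}"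
    by (intro absolutely_integrable_continuous_real continuous_intros cont_refl[OF k_cont]
        continuous_on_subset[OF phi_cont]) (use h in auto)
  have "ennreal \<bar>A2\<bar> \<le> (\<integral>\<^sup>+u. ennreal (indicator {0..x-h} u * \<bar>(\<kappa> (x - u) - \<kappa> (x - h - u)) * \<phi> u\<bar>) \<partial>lborel)"
    unfolding A2_def by (rule HKNN[OF abs2])
  also have "\<dots> \<le> (\<integral>\<^sup>+u. ennreal (Ck * h) * ennreal (indicator {0..x-h} u * (x - h - u) powr (-1/2) * \<bar>\<phi>h u\<bar>) \<partial>lborel)"
  proof (rule nn_integral_mono_AE)
    show "AE u in lborel. ennreal (indicator {0..x-h} u * \<bar>(\<kappa> (x - u) - \<kappa> (x - h - u)) * \<phi> u\<bar>)
        \<le> ennreal (Ck * h) * ennreal (indicator {0..x-h} u * (x - h - u) powr (-1/2) * \<bar>\<phi>h u\<bar>)"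
      using AE_lborel_singleton[of "x - h"]
    proof eventually_elim
      case (elim u)
      show ?case
      proof (cases "u \<in> {0..x-h}")
        case True
        then have u: "0 \<le> u" "u < x - h" using elim by auto
        have "\<bar>\<kappa> (x - u) - \<kappa> (x - h - u)\<bar> \<le> Ck * h * (x - h - u) powr (-1/2)"
          using k_lip[of "x - h - u" "x - u"] u h by auto
        then have "\<bar>(\<kappa> (x - u) - \<kappa> (x - h - u)) * \<phi> u\<bar> \<le> Ck * h * ((x - h - u) powr (-1/2) * \<bar>\<phi>h u\<bar>)"
          using phih_eq[of u] u h by (simp add: abs_mult mult_right_mono mult.assoc[symmetric])
        then show ?thesis using True Ck h
          by (simp add: ennreal_mult[symmetric] ennreal_leI mult.assoc)
      next
        case False
        then show ?thesis by simp
      qed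
    qed
  qed
  also have "\<dots> = ennreal (Ck * h) * J (x - h)"
    unfolding J_def by (rule nn_integral_cmult) measurable
  finally have bA2: "ennreal \<bar>A2\<bar> \<le> ennreal (Ck * h) * J (x - h)" .
  have "ennreal \<bar>\<psi> x - \<psi> (x - h)\<bar> \<le> ennreal (\<bar>A1\<bar> + \<bar>A2\<bar>)"
    unfolding split by (intro ennreal_leI abs_triangle_ineq)
  also have "\<dots> = ennreal \<bar>A1\<bar> + ennreal \<bar>A2\<bar>" by (simp add: ennreal_plus)
  also have "\<dots> \<le> ennreal (Mk * h * (\<bar>\<phi> x\<bar> + e)) + ennreal (Ck * h) * J (x - h)"
    using bA1 bA2 h by (intro add_mono ennreal_leI) (auto simp: algebra_simps)
  finally show ?thesis .
qed

end


context S0 begin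

definition "Phi t = integral {0..t} (\<lambda>u. (t - u) powr (-\<epsilon>) * \<bar>\<phi> u\<bar>)"

lemma Phi_int: "0 \<le> t \<Longrightarrow> t \<le> T \<Longrightarrow> (\<lambda>u. (t - u) powr (-\<epsilon>) * \<bar>\<phi> u\<bar>) integrable_on {0..t}"
proof -
  assume t: "0 \<le> t" "t \<le> T"
  have "(\<lambda>\<sigma>. \<sigma> powr (-\<epsilon>) * \<bar>\<phi> (t - \<sigma>)\<bar>) absolutely_integrable_on {0..t}"
    by (rule int1) (use t eps0 eps1 in \<open>auto intro!: continuous_intros cont_refl[OF phi_cont]\<close>)
  then have "(\<lambda>\<sigma>. \<sigma> powr (-\<epsilon>) * \<bar>\<phi> (t - \<sigma>)\<bar>) integrable_on {0..t}"
    by (auto intro: set_lebesgue_integral_eq_integral(1))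
  then show ?thesis using refl_integrable[where f="\<lambda>\<sigma>. \<sigma> powr (-\<epsilon>) * \<bar>\<phi> (t - \<sigma>)\<bar>" and r=t] by simp
qed

lemma Phi_refl: "Phi t = integral {0..t} (\<lambda>\<sigma>. \<sigma> powr (-\<epsilon>) * \<bar>\<phi> (t - \<sigma>)\<bar>)"
  unfolding Phi_def using refl_integral[where f="\<lambda>\<sigma>. \<sigma> powr (-\<epsilon>) * \<bar>\<phi> (t - \<sigma>)\<bar>" and r=t] by simp

lemma tonelli_bound:
  assumes y: "0 \<le> y" "y < t" "t \<le> T"
  shows "(\<integral>\<^sup>+\<sigma>. ennreal (indicator {0..y} \<sigma> * \<sigma> powr (-\<epsilon>)) * J (y - \<sigma>) \<partial>lborel) \<le> ennreal (8 * sqrt T * Phi t)"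
proof -
  define p where "p = \<epsilon> + 1/2"
  have p: "0 \<le> p" "p < 1" "1/4 \<le> 1 - p" using eps0 eps1 by (auto simp: p_def)
  define F where "F \<sigma> u = ennreal (indicator {0..y} \<sigma> * \<sigma> powr (-\<epsilon>) * ((if 0 \<le> u \<and> u \<le> y - \<sigma> then 1 else 0) * (y - \<sigma> - u) powr (-1/2) * \<bar>\<phi>h u\<bar>))" for \<sigma> u
  have Fm: "case_prod F \<in> borel_measurable (lborel \<Otimes>\<^sub>M lborel)"
  proof -
    have "case_prod F \<in> borel_measurable (borel \<Otimes>\<^sub>M borel)"
      unfolding F_def by measurable
    then show ?thesis
      by (subst measurable_cong_sets[OF sets_pair_measure_cong[OF sets_lborel sets_lborel] refl])
  qed
  have "(\<integral>\<^sup>+\<sigma>. ennreal (indicator {0..y} \<sigma> * \<sigma> powr (-\<epsilon>)) * J (y - \<sigma>) \<partial>lborel) = (\<integral>\<^sup>+\<sigma>. (\<integral>\<^sup>+u. F \<sigma> u \<partial>lborel) \<partial>lborel)"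
  proof (rule nn_integral_cong)
    fix \<sigma> :: real
    have "ennreal (indicator {0..y} \<sigma> * \<sigma> powr (-\<epsilon>)) * J (y - \<sigma>) =
       (\<integral>\<^sup>+u. ennreal (indicator {0..y} \<sigma> * \<sigma> powr (-\<epsilon>)) * ennreal (indicator {0..y-\<sigma>} u * (y - \<sigma> - u) powr (-1/2) * \<bar>\<phi>h u\<bar>) \<partial>lborel)"
      unfolding J_def by (rule nn_integral_cmult[symmetric]) measurable
    also have "\<dots> = (\<integral>\<^sup>+u. F \<sigma> u \<partial>lborel)"
      unfolding F_def by (intro nn_integral_cong) (simp add: ennreal_mult'[symmetric] mult.assoc indicator_def)
    finally show "ennreal (indicator {0..y} \<sigma> * \<sigma> powr (-\<epsilon>)) * J (y - \<sigma>) = (\<integral>\<^sup>+u. F \<sigma> u \<partial>lborel)" .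
  qed
  also have "\<dots> = (\<integral>\<^sup>+u. (\<integral>\<^sup>+\<sigma>. F \<sigma> u \<partial>lborel) \<partial>lborel)"
    by (rule lborel_pair.Fubini'[OF Fm, symmetric])
  also have "\<dots> \<le> (\<integral>\<^sup>+u. ennreal (indicator {0..t} u * (8 * sqrt T * ((t - u) powr (-\<epsilon>) * \<bar>\<phi> u\<bar>))) \<partial>lborel)"
  proof (rule nn_integral_mono)
    fix u :: real
    show "(\<integral>\<^sup>+\<sigma>. F \<sigma> u \<partial>lborel) \<le> ennreal (indicator {0..t} u * (8 * sqrt T * ((t - u) powr (-\<epsilon>) * \<bar>\<phi> u\<bar>)))"
    proof (cases "u \<in> {0..y}")
      case True
      have "(\<integral>\<^sup>+\<sigma>. F \<sigma> u \<partial>lborel) = (\<integral>\<^sup>+\<sigma>. ennreal \<bar>\<phi>h u\<bar> * ennreal (indicator {0..y-u} \<sigma> * (\<sigma> powr (-\<epsilon>) * (y - u - \<sigma>) powr (-1/2))) \<partial>lborel)"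
        unfolding F_def using True
        by (intro nn_integral_cong) (auto simp: indicator_def ennreal_mult'[symmetric] algebra_simps)
      also have "\<dots> = ennreal \<bar>\<phi>h u\<bar> * (\<integral>\<^sup>+\<sigma>. ennreal (indicator {0..y-u} \<sigma> * (\<sigma> powr (-\<epsilon>) * (y - u - \<sigma>) powr (-1/2))) \<partial>lborel)"
        by (rule nn_integral_cmult) measurable
      also have "\<dots> \<le> ennreal \<bar>\<phi>h u\<bar> * ennreal (2 * ((y - u) powr (1 - p) / (1 - p)))"
        using inner_nn[OF eps0 eps1, of "y - u"] True unfolding p_def by (intro mult_left_mono) auto
      also have "\<dots> \<le> ennreal (indicator {0..t} u * (8 * sqrt T * ((t - u) powr (-\<epsilon>) * \<bar>\<phi> u\<bar>)))"
      proof -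
        have u: "0 \<le> u" "u \<le> y" using True by auto
        have "(y - u) powr (1 - p) \<le> (t - u) powr (1 - p)" using u y p by (intro powr_mono2) auto
        also have "\<dots> = sqrt (t - u) * (t - u) powr (-\<epsilon>)"
          using u y unfolding p_def by (simp add: powr_add[symmetric] powr_half_sqrt[symmetric])
        also have "\<dots> \<le> sqrt T * (t - u) powr (-\<epsilon>)" using u y by (intro mult_right_mono) auto
        finally have a: "(y - u) powr (1 - p) \<le> sqrt T * (t - u) powr (-\<epsilon>)" .
        have b: "2 / (1 - p) \<le> 8" using p by (simp add: field_simps)
        have "2 * ((y - u) powr (1 - p) / (1 - p)) = 2 / (1 - p) * (y - u) powr (1 - p)" by simp
        also have "\<dots> \<le> 8 * (sqrt T * (t - u) powr (-\<epsilon>))" using a b by (intro mult_mono) auto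
        finally have c: "2 * ((y - u) powr (1 - p) / (1 - p)) \<le> 8 * (sqrt T * (t - u) powr (-\<epsilon>))" .
        have "\<bar>\<phi>h u\<bar> * (2 * ((y - u) powr (1 - p) / (1 - p))) \<le> \<bar>\<phi> u\<bar> * (8 * (sqrt T * (t - u) powr (-\<epsilon>)))"
        proof (rule mult_mono[OF _ c abs_ge_zero])
          show "\<bar>\<phi>h u\<bar> \<le> \<bar>\<phi> u\<bar>" using phih_eq[of u] u y by auto
          show "0 \<le> 2 * ((y - u) powr (1 - p) / (1 - p))" using p by simp
        qed
        then show ?thesis using u y p
          by (simp add: ennreal_mult'[symmetric] ennreal_leI mult_ac indicator_def)
      qed
      finally show ?thesis .
    next
      case False
      have "F \<sigma> u = 0" for \<sigma>
        unfolding F_def using False by (auto simp: indicator_def)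
      then show ?thesis by simp
    qed
  qed
  also have "\<dots> = ennreal (8 * sqrt T * Phi t)"
  proof -
    have "((\<lambda>u. 8 * sqrt T * ((t - u) powr (-\<epsilon>) * \<bar>\<phi> u\<bar>)) has_integral (8 * sqrt T * Phi t)) {0..t}"
      unfolding Phi_def using Phi_int[of t] y by (intro has_integral_mult_right) (auto simp: has_integral_integral)
    then show ?thesis using T_pos by (intro nn_integral_has_integral_lebesgue) (auto intro!: mult_nonneg_nonneg)
  qed
  finally show ?thesis .
qed

end


context S0 begin

lemma J_alt: "J z = (\<integral>\<^sup>+u. ennreal ((if 0 \<le> u \<and> u \<le> z then 1 else 0) * (z - u) powr (-1/2) * \<bar>\<phi>h u\<bar>) \<partial>lborel)"
  unfolding J_def by (intro nn_integral_cong) (simp add: indicator_def)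

lemma J_meas[measurable]: "J \<in> borel_measurable borel"
proof -
  have "(\<lambda>(z, u). ennreal ((if 0 \<le> u \<and> u \<le> z then 1 else 0) * (z - u) powr (-1/2) * \<bar>\<phi>h u\<bar>)) \<in> borel_measurable (borel \<Otimes>\<^sub>M borel)"
    by measurable
  then have "(\<lambda>(z, u). ennreal ((if 0 \<le> u \<and> u \<le> z then 1 else 0) * (z - u) powr (-1/2) * \<bar>\<phi>h u\<bar>)) \<in> borel_measurable (lborel \<Otimes>\<^sub>M lborel)"
    by (subst measurable_cong_sets[OF sets_pair_measure_cong[OF sets_lborel sets_lborel] refl])
  from lborel.borel_measurable_nn_integral_fst[OF this]
  have "(\<lambda>z. J z) \<in> borel_measurable lborel" unfolding J_alt by simp
  then show ?thesis by (simp add: measurable_lborel1)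
qed

lemma psi_lin_bnd:
  assumes Mp: "\<And>s. s \<in> {0..T} \<Longrightarrow> \<bar>\<phi> s\<bar> \<le> Mp" and z: "0 \<le> z" "z \<le> T"
  shows "\<bar>\<psi> z\<bar> \<le> Mk * Mp * z"
proof -
  have "\<bar>integral {0..z} (\<lambda>u. \<bar>\<phi> u\<bar>)\<bar> \<le> Mp * (z - 0)"
  proof (rule int_bound_Icc)
    show "(\<lambda>u. \<bar>\<phi> u\<bar>) integrable_on {0..z}"
      using z by (intro integrable_continuous_interval continuous_intros continuous_on_subset[OF phi_cont]) auto
  qed (use Mp z T_pos in \<open>auto intro: order_trans[OF abs_ge_zero]\<close>)
  then have "integral {0..z} (\<lambda>u. \<bar>\<phi> u\<bar>) \<le> Mp * z" by simp
  then show ?thesis using psi_bnd[OF z] Mk by (smt (verit) mult.assoc mult_left_mono)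
qed

lemma Phi_nonneg: "0 \<le> t \<Longrightarrow> t \<le> T \<Longrightarrow> 0 \<le> Phi t"
  unfolding Phi_def by (rule integral_nonneg[OF Phi_int]) auto

lemma S_diff:
  assumes h: "0 < h" "h < t" "t \<le> T"
    and Mp: "\<And>s. s \<in> {0..T} \<Longrightarrow> \<bar>\<phi> s\<bar> \<le> Mp" "0 \<le> Mp"
    and e: "\<And>u v. u \<in> {0..T} \<Longrightarrow> v \<in> {0..T} \<Longrightarrow> \<bar>u - v\<bar> \<le> h \<Longrightarrow> \<bar>\<phi> u - \<phi> v\<bar> \<le> e"
  shows "\<bar>S t - S (t - h)\<bar> \<le> Mk * Mp * h * h * (t - h) powr (-\<epsilon>)
     + h * (Mk * (Phi t + e * (T powr (1 - \<epsilon>) / (1 - \<epsilon>))) + 8 * Ck * sqrt T * Phi t)"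
proof -
  define y where "y = t - h"
  have y: "0 < y" "y < t" using h by (auto simp: y_def)
  have eps: "0 \<le> \<epsilon>" "\<epsilon> < 1" using eps0 eps1 by auto
  have e0: "0 \<le> e" using e[of 0 0] T_pos h by auto
  define f where "f \<sigma> = \<sigma> powr (-\<epsilon>) * \<psi> (t - \<sigma>)" for \<sigma>
  have fi: "f integrable_on {0..t}"
    using int1[OF cont_refl[OF psi_cont] eps] h unfolding f_def by (auto intro: set_lebesgue_integral_eq_integral(1))
  have fia: "f integrable_on {0..y}" "f integrable_on {y..t}"
    using fi y by (auto intro: integrable_subinterval_real)
  have gi: "(\<lambda>\<sigma>. \<sigma> powr (-\<epsilon>) * \<psi> (y - \<sigma>)) integrable_on {0..y}"
    using int1[OF cont_refl[OF psi_cont] eps] y h by (auto intro: set_lebesgue_integral_eq_integral(1))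
  have St: "S t = integral {0..y} f + integral {y..t} f"
    unfolding S_def f_def[symmetric] using Henstock_Kurzweil_Integration.integral_combine[OF _ _ fi, of y] y by simp
  define Sec where "Sec = integral {0..y} (\<lambda>\<sigma>. \<sigma> powr (-\<epsilon>) * (\<psi> (t - \<sigma>) - \<psi> (y - \<sigma>)))"
  have Sec: "Sec = integral {0..y} f - S y"
    unfolding Sec_def S_def f_def using integral_diff[OF fia(1)[unfolded f_def] gi] by (simp add: algebra_simps)
  have bFirst: "\<bar>integral {y..t} f\<bar> \<le> (Mk * Mp * h * y powr (-\<epsilon>)) * (t - y)"
  proof (rule int_bound_Icc)
    fix \<sigma> assume s: "\<sigma> \<in> {y..t}"
    have "\<sigma> powr (-\<epsilon>) \<le> y powr (-\<epsilon>)" using s y eps0 by (intro powr_mono2') auto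
    moreover have "\<bar>\<psi> (t - \<sigma>)\<bar> \<le> Mk * Mp * h"
    proof -
      have "\<bar>\<psi> (t - \<sigma>)\<bar> \<le> Mk * Mp * (t - \<sigma>)" using psi_lin_bnd[OF Mp(1), of "t - \<sigma>"] s y h by auto
      also have "\<dots> \<le> Mk * Mp * h" using s Mk Mp(2) by (intro mult_left_mono) (auto simp: y_def)
      finally show ?thesis .
    qed
    ultimately have "\<sigma> powr (-\<epsilon>) * \<bar>\<psi> (t - \<sigma>)\<bar> \<le> y powr (-\<epsilon>) * (Mk * Mp * h)"
      by (intro mult_mono) auto
    then show "\<bar>f \<sigma>\<bar> \<le> Mk * Mp * h * y powr (-\<epsilon>)" unfolding f_def by (simp add: abs_mult mult_ac)
  qed (use fia y Mk Mp h in auto)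
  have "ennreal \<bar>Sec\<bar> \<le> (\<integral>\<^sup>+\<sigma>. ennreal (indicator {0..y} \<sigma> * \<bar>\<sigma> powr (-\<epsilon>) * (\<psi> (t - \<sigma>) - \<psi> (y - \<sigma>))\<bar>) \<partial>lborel)"
    unfolding Sec_def
    by (rule HKNN, rule int1[OF _ eps])
       (use y h in \<open>auto intro!: continuous_intros cont_refl[OF psi_cont]\<close>)
  also have "\<dots> \<le> (\<integral>\<^sup>+\<sigma>. ennreal (indicator {0..y} \<sigma> * (\<sigma> powr (-\<epsilon>) * (Mk * h * (\<bar>\<phi>h (t - \<sigma>)\<bar> + e))))
                    + ennreal (Ck * h) * (ennreal (indicator {0..y} \<sigma> * \<sigma> powr (-\<epsilon>)) * J (y - \<sigma>)) \<partial>lborel)"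
  proof (rule nn_integral_mono)
    fix \<sigma> :: real
    show "ennreal (indicator {0..y} \<sigma> * \<bar>\<sigma> powr (-\<epsilon>) * (\<psi> (t - \<sigma>) - \<psi> (y - \<sigma>))\<bar>)
       \<le> ennreal (indicator {0..y} \<sigma> * (\<sigma> powr (-\<epsilon>) * (Mk * h * (\<bar>\<phi>h (t - \<sigma>)\<bar> + e))))
          + ennreal (Ck * h) * (ennreal (indicator {0..y} \<sigma> * \<sigma> powr (-\<epsilon>)) * J (y - \<sigma>))"
    proof (cases "\<sigma> \<in> {0..y}")
      case True
      have x: "h \<le> t - \<sigma>" "t - \<sigma> \<le> T" using True h by (auto simp: y_def)
      have "ennreal \<bar>\<psi> (t - \<sigma>) - \<psi> (t - \<sigma> - h)\<bar> \<le> ennreal (Mk * h * (\<bar>\<phi> (t - \<sigma>)\<bar> + e)) + ennreal (Ck * h) * J (t - \<sigma> - h)"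
        by (rule psi_diff_nn[OF h(1) x e])
      moreover have "t - \<sigma> - h = y - \<sigma>" by (simp add: y_def)
      moreover have "\<phi>h (t - \<sigma>) = \<phi> (t - \<sigma>)" using phih_eq x h by auto
      ultimately have d: "ennreal \<bar>\<psi> (t - \<sigma>) - \<psi> (y - \<sigma>)\<bar> \<le> ennreal (Mk * h * (\<bar>\<phi>h (t - \<sigma>)\<bar> + e)) + ennreal (Ck * h) * J (y - \<sigma>)"
        by simp
      have "ennreal (indicator {0..y} \<sigma> * \<bar>\<sigma> powr (-\<epsilon>) * (\<psi> (t - \<sigma>) - \<psi> (y - \<sigma>))\<bar>)
          = ennreal (\<sigma> powr (-\<epsilon>)) * ennreal \<bar>\<psi> (t - \<sigma>) - \<psi> (y - \<sigma>)\<bar>"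
        using True by (simp add: abs_mult ennreal_mult)
      also have "\<dots> \<le> ennreal (\<sigma> powr (-\<epsilon>)) * (ennreal (Mk * h * (\<bar>\<phi>h (t - \<sigma>)\<bar> + e)) + ennreal (Ck * h) * J (y - \<sigma>))"
        by (rule mult_left_mono[OF d]) simp
      also have "\<dots> = ennreal (indicator {0..y} \<sigma> * (\<sigma> powr (-\<epsilon>) * (Mk * h * (\<bar>\<phi>h (t - \<sigma>)\<bar> + e))))
          + ennreal (Ck * h) * (ennreal (indicator {0..y} \<sigma> * \<sigma> powr (-\<epsilon>)) * J (y - \<sigma>))"
        using True Mk h e0 by (simp add: distrib_left ennreal_mult mult_ac)
      finally show ?thesis .
    next
      case False
      then show ?thesis by simp
    qed
  qed
  also have "\<dots> = (\<integral>\<^sup>+\<sigma>. ennreal (indicator {0..y} \<sigma> * (\<sigma> powr (-\<epsilon>) * (Mk * h * (\<bar>\<phi>h (t - \<sigma>)\<bar> + e)))) \<partial>lborel)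
      + ennreal (Ck * h) * (\<integral>\<^sup>+\<sigma>. ennreal (indicator {0..y} \<sigma> * \<sigma> powr (-\<epsilon>)) * J (y - \<sigma>) \<partial>lborel)"
    by (subst nn_integral_add) (auto simp: nn_integral_cmult)
  also have "\<dots> \<le> ennreal (Mk * h * (Phi t + e * (T powr (1 - \<epsilon>) / (1 - \<epsilon>)))) + ennreal (Ck * h) * ennreal (8 * sqrt T * Phi t)"
  proof (rule add_mono)
    show "ennreal (Ck * h) * (\<integral>\<^sup>+\<sigma>. ennreal (indicator {0..y} \<sigma> * \<sigma> powr (-\<epsilon>)) * J (y - \<sigma>) \<partial>lborel) \<le> ennreal (Ck * h) * ennreal (8 * sqrt T * Phi t)"
      using tonelli_bound[of y t] y h by (intro mult_left_mono) auto
    define g where "g \<sigma> = \<sigma> powr (-\<epsilon>) * (Mk * h * (\<bar>\<phi> (t - \<sigma>)\<bar> + e))" for \<sigma>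
    have cg: "continuous_on {0..y} (\<lambda>\<sigma>. Mk * h * (\<bar>\<phi> (t - \<sigma>)\<bar> + e))"
      by (intro continuous_intros cont_refl[OF phi_cont]) (use y h in auto)
    have gi: "g integrable_on {0..y}"
      using int1[OF cg eps] y h unfolding g_def
      by (auto intro: set_lebesgue_integral_eq_integral(1))
    have "(\<integral>\<^sup>+\<sigma>. ennreal (indicator {0..y} \<sigma> * (\<sigma> powr (-\<epsilon>) * (Mk * h * (\<bar>\<phi>h (t - \<sigma>)\<bar> + e)))) \<partial>lborel)
        = (\<integral>\<^sup>+\<sigma>. ennreal (indicator {0..y} \<sigma> * g \<sigma>) \<partial>lborel)"
      unfolding g_def using y h by (intro nn_integral_cong) (auto simp: indicator_def phih_eq)
    also have "\<dots> = ennreal (integral {0..y} g)"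
    proof (rule nn_integral_has_integral_lebesgue)
      show "\<And>x. x \<in> {0..y} \<Longrightarrow> 0 \<le> g x" using Mk h e0 by (auto simp: g_def)
      show "(g has_integral integral {0..y} g) {0..y}" using gi by (simp add: has_integral_integral)
    qed
    also have "\<dots> \<le> ennreal (Mk * h * (Phi t + e * (T powr (1 - \<epsilon>) / (1 - \<epsilon>))))"
    proof (rule ennreal_leI)
      have c1: "continuous_on {0..t} (\<lambda>\<sigma>. \<bar>\<phi> (t - \<sigma>)\<bar>)"
        by (intro continuous_intros cont_refl[OF phi_cont]) (use y h in auto)
      have i1: "(\<lambda>\<sigma>. \<sigma> powr (-\<epsilon>) * \<bar>\<phi> (t - \<sigma>)\<bar>) integrable_on {0..t}"
        using int1[OF c1 eps] y h
        by (auto intro: set_lebesgue_integral_eq_integral(1))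
      have i1y: "(\<lambda>\<sigma>. \<sigma> powr (-\<epsilon>) * \<bar>\<phi> (t - \<sigma>)\<bar>) integrable_on {0..y}"
        using i1 y by (auto intro: integrable_subinterval_real)
      have i2: "((\<lambda>\<sigma>. \<sigma> powr (-\<epsilon>)) has_integral y powr (1 - \<epsilon>) / (1 - \<epsilon>)) {0..y}"
        using powr_has_int[OF eps] y by simp
      have "integral {0..y} g = Mk * h * (integral {0..y} (\<lambda>\<sigma>. \<sigma> powr (-\<epsilon>) * \<bar>\<phi> (t - \<sigma>)\<bar>) + e * (y powr (1 - \<epsilon>) / (1 - \<epsilon>)))"
      proof -
        have "g = (\<lambda>\<sigma>. Mk * h * (\<sigma> powr (-\<epsilon>) * \<bar>\<phi> (t - \<sigma>)\<bar>) + Mk * h * e * \<sigma> powr (-\<epsilon>))"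
          unfolding g_def by (auto simp: algebra_simps)
        then have "integral {0..y} g = Mk * h * integral {0..y} (\<lambda>\<sigma>. \<sigma> powr (-\<epsilon>) * \<bar>\<phi> (t - \<sigma>)\<bar>) + Mk * h * e * (y powr (1 - \<epsilon>) / (1 - \<epsilon>))"
          using i1y i2 by (simp add: integral_add integrable_on_mult_right integral_mult_right has_integral_integrable integral_unique)
        then show ?thesis by (simp add: algebra_simps)
      qed
      also have "\<dots> \<le> Mk * h * (Phi t + e * (T powr (1 - \<epsilon>) / (1 - \<epsilon>)))"
      proof (rule mult_left_mono[OF add_mono])
        show "integral {0..y} (\<lambda>\<sigma>. \<sigma> powr (-\<epsilon>) * \<bar>\<phi> (t - \<sigma>)\<bar>) \<le> Phi t"
          unfolding Phi_refl using i1y i1 y by (intro integral_subset_le) auto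
        have "y powr (1 - \<epsilon>) \<le> T powr (1 - \<epsilon>)" using y h eps by (intro powr_mono2) auto
        then show "e * (y powr (1 - \<epsilon>) / (1 - \<epsilon>)) \<le> e * (T powr (1 - \<epsilon>) / (1 - \<epsilon>))"
          using e0 eps by (intro mult_left_mono divide_right_mono) auto
      qed (use Mk h in auto)
      finally show "integral {0..y} g \<le> Mk * h * (Phi t + e * (T powr (1 - \<epsilon>) / (1 - \<epsilon>)))" .
    qed
    finally show "(\<integral>\<^sup>+\<sigma>. ennreal (indicator {0..y} \<sigma> * (\<sigma> powr (-\<epsilon>) * (Mk * h * (\<bar>\<phi>h (t - \<sigma>)\<bar> + e)))) \<partial>lborel)
        \<le> ennreal (Mk * h * (Phi t + e * (T powr (1 - \<epsilon>) / (1 - \<epsilon>))))" .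
  qed
  also have "\<dots> = ennreal (Mk * h * (Phi t + e * (T powr (1 - \<epsilon>) / (1 - \<epsilon>))) + Ck * h * (8 * sqrt T * Phi t))"
    using Phi_nonneg[of t] h Ck Mk e0 eps
    by (simp add: ennreal_plus[symmetric] ennreal_mult[symmetric] del: ennreal_plus)
  finally have bSec: "\<bar>Sec\<bar> \<le> Mk * h * (Phi t + e * (T powr (1 - \<epsilon>) / (1 - \<epsilon>))) + Ck * h * (8 * sqrt T * Phi t)"
    using Phi_nonneg[of t] h Ck Mk e0 eps by (subst (asm) ennreal_le_iff) (auto intro!: add_nonneg_nonneg mult_nonneg_nonneg)
  have "S t - S (t - h) = Sec + integral {y..t} f" unfolding Sec St y_def by simp
  then have "\<bar>S t - S (t - h)\<bar> \<le> \<bar>integral {y..t} f\<bar> + \<bar>Sec\<bar>" by simp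
  also have "\<dots> \<le> (Mk * Mp * h * y powr (-\<epsilon>)) * (t - y) + (Mk * h * (Phi t + e * (T powr (1 - \<epsilon>) / (1 - \<epsilon>))) + Ck * h * (8 * sqrt T * Phi t))"
    using bFirst bSec by linarith
  also have "\<dots> = Mk * Mp * h * h * (t - h) powr (-\<epsilon>)
     + h * (Mk * (Phi t + e * (T powr (1 - \<epsilon>) / (1 - \<epsilon>))) + 8 * Ck * sqrt T * Phi t)"
    by (simp add: y_def algebra_simps)
  finally show ?thesis .
qed

end


lemma le_by_eps:
  fixes a b M :: real
  assumes "\<And>e. 0 < e \<Longrightarrow> a \<le> b + e * M" "0 \<le> M"
  shows "a \<le> b"
proof (rule ccontr)
  assume "\<not> a \<le> b"
  then have "0 < (a - b) / (2 * (M + 1))" using assms(2) by (simp add: add_nonneg_pos)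
  from assms(1)[OF this] have "a \<le> b + (a - b) / (2 * (M + 1)) * M" .
  moreover have "(a - b) / (2 * (M + 1)) * M < a - b"
  proof -
    have "(a - b) / (2 * (M + 1)) * M = (a - b) * (M / (2 * (M + 1)))" by simp
    also have "\<dots> < (a - b) * 1"
      using \<open>\<not> a \<le> b\<close> assms(2) by (intro mult_strict_left_mono) (auto simp: field_simps)
    finally show ?thesis by simp
  qed
  ultimately show False by simp
qed

context S0 begin

lemma main_bound:
  fixes K D1 :: "real \<Rightarrow> real" and \<zeta> c D2 t :: real
  assumes t: "0 < t" "t \<le> T" and c: "0 \<le> c" and z: "0 \<le> \<zeta>"
    and K: "\<And>s. 0 < s \<Longrightarrow> s \<le> T \<Longrightarrow> K s = \<kappa> s"
    and D1der: "\<And>s. s \<in> {0<..T} \<Longrightarrow> ((\<lambda>r. \<zeta> * integral {0..r} (\<lambda>s. K (r - s) * w s)) has_real_derivative D1 s) (at s within {0..T})"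
    and D2der: "((\<lambda>r. c * integral {0..r} (\<lambda>s. (r - s) powr (-\<epsilon>) * D1 s)) has_real_derivative D2) (at t within {0..T})"
  shows "\<bar>D2\<bar> \<le> c * \<zeta> * (Mk + 8 * Ck * sqrt T) * (Phi t + \<bar>w 0\<bar> * t powr (-\<epsilon>))"
proof -
  have D1: "D1 s = \<zeta> * (\<kappa> s * w 0 + \<psi> s)" if "0 < s" "s \<le> T" for s
    using D1_formula[OF that K D1der] that by auto
  define F where "F r = c * integral {0..r} (\<lambda>s. (r - s) powr (-\<epsilon>) * D1 s)" for r
  have F: "F r = c * (\<zeta> * (w 0 * T1 r + S r))" if "0 < r" "r \<le> T" for r
    unfolding F_def using F_formula[OF that, of D1 \<zeta>] D1 that by auto
  have lim: "((\<lambda>h. (F t - F (t - h)) / h) \<longlongrightarrow> D2) (at_right 0)"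
    using leftq[OF D2der[folded F_def] t] .
  obtain Mp where Mp: "0 \<le> Mp" "\<And>s. s \<in> {0..T} \<Longrightarrow> \<bar>\<phi> s\<bar> \<le> Mp" using phi_bnd by blast
  define C1 where "C1 = Mk + 8 * Ck * sqrt T"
  have C1: "0 \<le> C1" using Mk Ck T_pos by (simp add: C1_def add_nonneg_nonneg)
  define K0 where "K0 = T powr (1 - \<epsilon>) / (1 - \<epsilon>)"
  have K0: "0 \<le> K0" using eps1 by (simp add: K0_def)
  define B where "B = c * \<zeta> * C1 * (Phi t + \<bar>w 0\<bar> * t powr (-\<epsilon>))"
  define M' where "M' = c * \<zeta> * (\<bar>w 0\<bar> * C1 + 1 + Mk * K0)"
  have M': "0 \<le> M'" unfolding M'_def using c z C1 Mk K0 by (intro mult_nonneg_nonneg add_nonneg_nonneg) auto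
  have "\<bar>D2\<bar> \<le> B + e * M'" if e: "0 < e" for e
  proof -
    have "uniformly_continuous_on {0..T} \<phi>" by (rule compact_uniformly_continuous[OF phi_cont compact_Icc])
    then obtain d where d: "d > 0" "\<And>x y. x \<in> {0..T} \<Longrightarrow> y \<in> {0..T} \<Longrightarrow> dist y x < d \<Longrightarrow> dist (\<phi> y) (\<phi> x) < e"
      unfolding uniformly_continuous_on_def using e by metis
    define KK where "KK = Mk * Mp * (t/2) powr (-\<epsilon>)"
    have KK: "0 \<le> KK" using Mk Mp by (simp add: KK_def)
    define d' where "d' = min (t/2) (min d (e / (KK + 1)))"
    have d': "0 < d'" using t d e KK by (simp add: d'_def add_nonneg_pos)
    have ev1: "eventually (\<lambda>h. 0 < h \<and> h < d') (at_right (0::real))"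
      using d' by (auto simp: eventually_at_right[of 0] intro!: exI[of _ d'])
    have "((\<lambda>h. (t - h) powr (-\<epsilon>)) \<longlongrightarrow> t powr (-\<epsilon>)) (at_right 0)"
      using t by (intro tendsto_eq_intros) auto
    then have ev2: "eventually (\<lambda>h. (t - h) powr (-\<epsilon>) \<le> t powr (-\<epsilon>) + e) (at_right 0)"
      using e by (auto dest!: tendstoD[of _ _ _ e] elim!: eventually_mono simp: dist_real_def)
    have "eventually (\<lambda>h. \<bar>(F t - F (t - h)) / h\<bar> \<le> B + e * M') (at_right 0)"
      using ev1 ev2
    proof eventually_elim
      case (elim h)
      then have h: "0 < h" "h < t/2" "h < d" "h < e / (KK + 1)" by (auto simp: d'_def)
      have hT: "h < t" "t - h \<le> T" using h t by auto
      have quot: "(F t - F (t - h)) / h = c * \<zeta> * (w 0 * ((T1 t - T1 (t - h)) / h) + (S t - S (t - h)) / h)"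
        using F[of t] F[of "t - h"] t h by (simp add: field_simps)
      have bT1: "\<bar>T1 t - T1 (t - h)\<bar> / h \<le> C1 * (t powr (-\<epsilon>) + e)"
      proof -
        have "\<bar>T1 t - T1 (t - h)\<bar> \<le> C1 * (t - (t - h)) * (t - h) powr (-\<epsilon>)"
          using T1_lip[of "t - h" t] h t unfolding C1_def by auto
        also have "\<dots> \<le> C1 * h * (t powr (-\<epsilon>) + e)" using elim C1 h by (simp add: mult_left_mono)
        finally show ?thesis using h by (simp add: field_simps)
      qed
      have econd: "\<And>u v. u \<in> {0..T} \<Longrightarrow> v \<in> {0..T} \<Longrightarrow> \<bar>u - v\<bar> \<le> h \<Longrightarrow> \<bar>\<phi> u - \<phi> v\<bar> \<le> e"
        using d(2) h by (fastforce simp: dist_real_def)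
      have bS0: "\<bar>S t - S (t - h)\<bar> \<le> Mk * Mp * h * h * (t - h) powr (-\<epsilon>)
          + h * (Mk * (Phi t + e * K0) + 8 * Ck * sqrt T * Phi t)"
        using S_diff[OF h(1) hT(1) t(2) Mp(2) Mp(1) econd] unfolding K0_def by simp
      have "Mk * Mp * h * (t - h) powr (-\<epsilon>) \<le> h * KK"
      proof -
        have "(t - h) powr (-\<epsilon>) \<le> (t/2) powr (-\<epsilon>)" using h eps0 by (intro powr_mono2') auto
        then have "Mk * Mp * (t - h) powr (-\<epsilon>) \<le> KK" unfolding KK_def using Mk Mp by (intro mult_left_mono) auto
        then show ?thesis using h by (simp add: mult_ac mult_left_mono)
      qed
      also have "\<dots> \<le> e"
      proof -
        have "h * KK \<le> h * (KK + 1)" using h by simp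
        also have "\<dots> \<le> e" using h KK by (simp add: field_simps)
        finally show ?thesis .
      qed
      finally have small: "Mk * Mp * h * (t - h) powr (-\<epsilon>) \<le> e" .
      have bS: "\<bar>S t - S (t - h)\<bar> / h \<le> e + (Mk * (Phi t + e * K0) + 8 * Ck * sqrt T * Phi t)"
      proof -
        have "\<bar>S t - S (t - h)\<bar> / h \<le> (Mk * Mp * h * h * (t - h) powr (-\<epsilon>) + h * (Mk * (Phi t + e * K0) + 8 * Ck * sqrt T * Phi t)) / h"
          using bS0 h by (simp add: divide_right_mono)
        also have "\<dots> = Mk * Mp * h * (t - h) powr (-\<epsilon>) + (Mk * (Phi t + e * K0) + 8 * Ck * sqrt T * Phi t)"
          using h by (simp add: field_simps)
        finally show ?thesis using small by linarith
      qed
      have "\<bar>(F t - F (t - h)) / h\<bar> \<le> c * \<zeta> * (\<bar>w 0\<bar> * (\<bar>T1 t - T1 (t - h)\<bar> / h) + \<bar>S t - S (t - h)\<bar> / h)"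
      proof -
        have "\<bar>w 0 * ((T1 t - T1 (t - h)) / h) + (S t - S (t - h)) / h\<bar> \<le> \<bar>w 0\<bar> * (\<bar>T1 t - T1 (t - h)\<bar> / h) + \<bar>S t - S (t - h)\<bar> / h"
          using h by (simp add: abs_mult order_trans[OF abs_triangle_ineq])
        then show ?thesis unfolding quot using c z by (simp add: abs_mult mult_left_mono)
      qed
      also have "\<dots> \<le> c * \<zeta> * (\<bar>w 0\<bar> * (C1 * (t powr (-\<epsilon>) + e)) + (e + (Mk * (Phi t + e * K0) + 8 * Ck * sqrt T * Phi t)))"
        using bT1 bS c z by (intro mult_left_mono add_mono) auto
      also have "\<dots> = B + e * M'" unfolding B_def M'_def C1_def by (simp add: algebra_simps)
      finally show ?case .
    qed
    then show ?thesis using Lim_norm_ubound[OF trivial_limit_at_right_real lim] by simp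
  qed
  then have "\<bar>D2\<bar> \<le> B" by (rule le_by_eps[OF _ M'])
  then show ?thesis unfolding B_def C1_def by (simp add: algebra_simps)
qed

end


lemma ln_bound:
  fixes s T :: real
  assumes s: "0 < s" "s \<le> T"
  shows "\<bar>ln s\<bar> \<le> 2 * (1 + T) * s powr (-1/2)"
proof -
  have p: "0 < s powr (-1/2)" "0 < s powr (1/2)" using s by auto
  have a: "- ln s < 2 * s powr (-1/2)"
  proof -
    have "ln (s powr (-1/2)) < s powr (-1/2)" using p by (intro ln_less_self) auto
    moreover have "ln (s powr (-1/2)) = -1/2 * ln s" using s by (simp add: ln_powr)
    ultimately show ?thesis by simp
  qed
  have b: "ln s < 2 * T * s powr (-1/2)"
  proof -
    have "ln (s powr (1/2)) < s powr (1/2)" using p by (intro ln_less_self) auto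
    moreover have "ln (s powr (1/2)) = 1/2 * ln s" using s by (simp add: ln_powr)
    moreover have "s powr (1/2) = s * s powr (-1/2)"
    proof -
      have "s powr (1/2) = s powr (1 + (-1/2))" by simp
      also have "\<dots> = s powr 1 * s powr (-1/2)" by (rule powr_add)
      finally show ?thesis using s by simp
    qed
    moreover have "s * s powr (-1/2) \<le> T * s powr (-1/2)" using s p by (intro mult_right_mono) auto
    ultimately show ?thesis by simp
  qed
  have c1: "2 * s powr (-1/2) \<le> 2 * (1 + T) * s powr (-1/2)" using p s by (intro mult_right_mono) auto
  have c2: "2 * T * s powr (-1/2) \<le> 2 * (1 + T) * s powr (-1/2)" using p s by (intro mult_right_mono) auto
  show ?thesis unfolding abs_le_iff using a b c1 c2 by linarith
qed

lemma kernel_props: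
  fixes \<alpha> \<alpha>1 \<alpha>2 :: "real \<Rightarrow> real" and T \<alpha>s :: real
  assumes T: "0 < T" and as: "0 < \<alpha>s" "\<forall>t\<in>{0..T}. \<alpha>s \<le> \<alpha> t \<and> \<alpha> t \<le> 1"
    and a0: "\<alpha> 0 = 1"
    and d1: "\<forall>t\<in>{0..T}. (\<alpha> has_real_derivative \<alpha>1 t) (at t within {0..T})"
    and d2: "\<forall>t\<in>{0..T}. (\<alpha>1 has_real_derivative \<alpha>2 t) (at t within {0..T})"
  defines "\<kappa> \<equiv> \<lambda>s. exp ((\<alpha> s - 1) * ln s) * rGamma (\<alpha> s)"
  shows "\<exists>Mk Ck. continuous_on {0..T} \<kappa> \<and> (\<forall>s\<in>{0..T}. \<bar>\<kappa> s\<bar> \<le> Mk) \<and> 0 \<le> Ck \<and>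
           (\<forall>x y. 0 < y \<longrightarrow> y \<le> x \<longrightarrow> x \<le> T \<longrightarrow> \<bar>\<kappa> x - \<kappa> y\<bar> \<le> Ck * (x - y) * y powr (-1/2))"
proof -
  have a_cont: "continuous_on {0..T} \<alpha>"
    using d1 by (meson DERIV_continuous continuous_on_eq_continuous_within)
  have a1_cont: "continuous_on {0..T} \<alpha>1"
    using d2 by (meson DERIV_continuous continuous_on_eq_continuous_within)
  obtain Ma where Ma: "0 \<le> Ma" "\<And>s. s \<in> {0..T} \<Longrightarrow> \<bar>\<alpha>1 s\<bar> \<le> Ma"
  proof -
    obtain M where M: "\<And>s. s \<in> {0..T} \<Longrightarrow> norm (\<alpha>1 s) \<le> M"
      using compact_imp_bounded[OF compact_continuous_image[OF a1_cont compact_Icc]]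
      by (fastforce simp: bounded_iff)
    show ?thesis using M M[of 0] T by (intro that[of M]) force+
  qed
  have a_lin: "\<bar>\<alpha> s - 1\<bar> \<le> Ma * s" if s: "0 \<le> s" "s \<le> T" for s
  proof -
    have "norm (\<alpha> s - \<alpha> 0) \<le> Ma * norm (s - 0)"
    proof (rule field_differentiable_bound[where S="{0..s}" and f'=\<alpha>1])
      fix z assume z: "z \<in> {0..s}"
      show "(\<alpha> has_field_derivative \<alpha>1 z) (at z within {0..s})"
        using DERIV_subset[of \<alpha> "\<alpha>1 z" z "{0..T}" "{0..s}"] d1 z s by auto
      show "norm (\<alpha>1 z) \<le> Ma" using Ma(2)[of z] z s by auto
    qed (use s in auto)
    then show ?thesis using s a0 by simp
  qed
  define E where "E s = exp ((\<alpha> s - 1) * ln s)" for s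
  have k_eq: "\<kappa> = (\<lambda>s. E s * rGamma (\<alpha> s))" unfolding \<kappa>_def E_def by simp
  have E_cont: "continuous_on {0..T} E"
    unfolding continuous_on_eq_continuous_within
  proof
    fix x assume x: "x \<in> {0..T}"
    show "continuous (at x within {0..T}) E"
    proof (cases "x = 0")
      case False
      then have "0 < x" using x by auto
      have "continuous (at x within {0..T}) \<alpha>" using a_cont x by (simp add: continuous_on_eq_continuous_within)
      then show ?thesis unfolding E_def using \<open>0 < x\<close>
        by (intro continuous_intros) auto
    next
      case True
      have "((\<lambda>s. (\<alpha> s - 1) * ln s) \<longlongrightarrow> 0) (at_right 0)"
      proof (rule Lim_null_comparison)
        show "eventually (\<lambda>s. norm ((\<alpha> s - 1) * ln s) \<le> Ma * (2 * (1 + T)) * sqrt s) (at_right 0)"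
          unfolding eventually_at_right[OF T]
        proof (intro exI[of _ T] conjI allI impI)
          fix s :: real assume s: "0 < s" "s < T"
          have "norm ((\<alpha> s - 1) * ln s) = \<bar>\<alpha> s - 1\<bar> * \<bar>ln s\<bar>" by (simp add: abs_mult)
          also have "\<dots> \<le> (Ma * s) * (2 * (1 + T) * s powr (-1/2))"
            using a_lin[of s] ln_bound[of s T] s by (intro mult_mono) auto
          also have "\<dots> = Ma * (2 * (1 + T)) * (s * s powr (-1/2))" by (simp add: mult_ac)
          also have "s * s powr (-1/2) = sqrt s"
          proof -
            have "s powr (1/2) = s powr (1 + (-1/2))" by simp
            also have "\<dots> = s powr 1 * s powr (-1/2)" by (rule powr_add)
            finally have "s powr (1/2) = s * s powr (-1/2)" using s by simp
            then show ?thesis using s by (simp add: powr_half_sqrt)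
          qed
          finally show "norm ((\<alpha> s - 1) * ln s) \<le> Ma * (2 * (1 + T)) * sqrt s" .
        qed (use T in auto)
        show "((\<lambda>s. Ma * (2 * (1 + T)) * sqrt s) \<longlongrightarrow> 0) (at_right 0)"
          by (rule tendsto_eq_intros refl | simp)+
      qed
      then have "(E \<longlongrightarrow> exp 0) (at_right 0)" unfolding E_def by (intro tendsto_intros)
      moreover have "E 0 = 1" by (simp add: E_def)
      ultimately show ?thesis using True T
        by (simp add: continuous_within at_within_Icc_at_right)
    qed
  qed
  have rg_cont: "continuous_on {0..T} (\<lambda>s. rGamma (\<alpha> s))"
    by (rule continuous_on_compose2[OF continuous_on_rGamma[of UNIV] a_cont]) auto
  have k_cont: "continuous_on {0..T} \<kappa>" unfolding k_eq by (intro continuous_intros E_cont rg_cont)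
  obtain Mk where Mk: "\<And>s. s \<in> {0..T} \<Longrightarrow> \<bar>\<kappa> s\<bar> \<le> Mk"
    using compact_imp_bounded[OF compact_continuous_image[OF k_cont compact_Icc]]
    by (fastforce simp: bounded_iff)
  obtain Eb where Eb: "\<And>s. s \<in> {0..T} \<Longrightarrow> \<bar>E s\<bar> \<le> Eb"
    using compact_imp_bounded[OF compact_continuous_image[OF E_cont compact_Icc]]
    by (fastforce simp: bounded_iff)
  obtain Rg where Rg: "\<And>s. s \<in> {0..T} \<Longrightarrow> \<bar>rGamma (\<alpha> s)\<bar> \<le> Rg"
    using compact_imp_bounded[OF compact_continuous_image[OF rg_cont compact_Icc]]
    by (fastforce simp: bounded_iff)
  define Dg where "Dg = \<bar>Digamma \<alpha>s\<bar> + \<bar>Digamma (1::real)\<bar>"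
  have Dg: "\<bar>Digamma (\<alpha> s)\<bar> \<le> Dg" if "s \<in> {0..T}" for s
  proof -
    have "Digamma \<alpha>s \<le> Digamma (\<alpha> s)" using as that by (intro Digamma_real_mono) auto
    moreover have "Digamma (\<alpha> s) \<le> Digamma (1::real)" using as that by (intro Digamma_real_mono) force+
    ultimately show ?thesis unfolding Dg_def by linarith
  qed
  have Mk0: "0 \<le> Mk" using Mk[of 0] T by (auto intro: order_trans[OF abs_ge_zero])
  have Eb0: "0 \<le> Eb" using Eb[of 0] T by (auto intro: order_trans[OF abs_ge_zero])
  have Rg0: "0 \<le> Rg" using Rg[of 0] T by (auto intro: order_trans[OF abs_ge_zero])
  have Dg0: "0 \<le> Dg" unfolding Dg_def by simp
  define kd where "kd s = E s * (\<alpha>1 s * ln s + (\<alpha> s - 1) / s) * rGamma (\<alpha> s) + E s * ((- rGamma (\<alpha> s) * Digamma (\<alpha> s)) * \<alpha>1 s)" for s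
  have kder: "(\<kappa> has_real_derivative kd x) (at x within {0..T})" if x: "0 < x" "x \<le> T" for x
  proof -
    have ax: "\<alpha> x \<notin> \<int>\<^sub>\<le>\<^sub>0"
    proof
      assume "\<alpha> x \<in> \<int>\<^sub>\<le>\<^sub>0"
      then have "\<alpha> x \<le> 0" by (rule nonpos_Ints_nonpos)
      moreover have "\<alpha>s \<le> \<alpha> x" using as x by auto
      ultimately show False using as by linarith
    qed
    have dr: "((\<lambda>s. rGamma (\<alpha> s)) has_real_derivative (- rGamma (\<alpha> x) * Digamma (\<alpha> x)) * \<alpha>1 x) (at x within {0..T})"
      by (rule DERIV_chain2[where g=\<alpha> and x=x, OF has_field_derivative_rGamma_no_nonpos_int[OF ax, where A=UNIV]]) (use d1 x in auto)
    have da: "(\<alpha> has_real_derivative \<alpha>1 x) (at x within {0..T})" using d1 x by auto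
    have dl: "(ln has_real_derivative inverse x) (at x within {0..T})"
      using DERIV_ln[OF x(1)] by (rule has_field_derivative_at_within)
    have dg: "((\<lambda>s. (\<alpha> s - 1) * ln s) has_real_derivative (\<alpha>1 x * ln x + (\<alpha> x - 1) / x)) (at x within {0..T})"
      using DERIV_mult[OF DERIV_diff[OF da DERIV_const[of 1]] dl] by (simp add: field_simps)
    have dE: "(E has_real_derivative E x * (\<alpha>1 x * ln x + (\<alpha> x - 1) / x)) (at x within {0..T})"
      unfolding E_def using DERIV_chain2[OF DERIV_exp dg] by (simp add: mult_ac)
    show ?thesis unfolding k_eq kd_def using DERIV_mult[OF dE dr] by (simp add: mult_ac)
  qed
  define Cb where "Cb = Mk * Ma * (2 * (1 + T) + sqrt T) + Eb * Rg * Dg * Ma * sqrt T"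
  have Cb0: "0 \<le> Cb" unfolding Cb_def using Mk0 Ma Eb0 Rg0 Dg0 T by (intro add_nonneg_nonneg mult_nonneg_nonneg) auto
  have kdb: "\<bar>kd s\<bar> \<le> Cb * s powr (-1/2)" if s: "0 < s" "s \<le> T" for s
  proof -
    have sT: "s \<in> {0..T}" using s by auto
    have one: "1 \<le> sqrt T * s powr (-1/2)"
    proof -
      have "s powr (-1/2) = 1 / sqrt s" using s by (simp add: powr_minus_divide powr_half_sqrt)
      then have a: "sqrt s * s powr (-1/2) = 1" using s by simp
      have "sqrt s * s powr (-1/2) \<le> sqrt T * s powr (-1/2)" using s by (intro mult_right_mono) auto
      with a show ?thesis by simp
    qed
    have e1: "E s * (\<alpha>1 s * ln s + (\<alpha> s - 1) / s) * rGamma (\<alpha> s) = \<kappa> s * (\<alpha>1 s * ln s + (\<alpha> s - 1) / s)"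
      unfolding k_eq by (simp add: mult_ac)
    have b1: "\<bar>\<alpha>1 s * ln s\<bar> \<le> Ma * (2 * (1 + T) * s powr (-1/2))"
      unfolding abs_mult using Ma(2)[OF sT] ln_bound[OF s] Ma(1) by (intro mult_mono) auto
    have b2: "\<bar>(\<alpha> s - 1) / s\<bar> \<le> Ma * (sqrt T * s powr (-1/2))"
    proof -
      have "\<bar>(\<alpha> s - 1) / s\<bar> \<le> Ma" using a_lin[of s] s by (simp add: abs_divide field_simps)
      also have "\<dots> \<le> Ma * (sqrt T * s powr (-1/2))" using mult_left_mono[OF one Ma(1)] by simp
      finally show ?thesis .
    qed
    have b3: "\<bar>E s * ((- rGamma (\<alpha> s) * Digamma (\<alpha> s)) * \<alpha>1 s)\<bar> \<le> Eb * Rg * Dg * Ma * (sqrt T * s powr (-1/2))"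
    proof -
      have "\<bar>E s * ((- rGamma (\<alpha> s) * Digamma (\<alpha> s)) * \<alpha>1 s)\<bar> = \<bar>E s\<bar> * \<bar>rGamma (\<alpha> s)\<bar> * \<bar>Digamma (\<alpha> s)\<bar> * \<bar>\<alpha>1 s\<bar>"
        by (simp add: abs_mult mult_ac)
      also have "\<dots> \<le> Eb * Rg * Dg * Ma"
        using Eb[OF sT] Rg[OF sT] Dg[OF sT] Ma(2)[OF sT] Eb0 Rg0 Dg0
        by (intro mult_mono) (auto intro: mult_nonneg_nonneg)
      also have "\<dots> \<le> Eb * Rg * Dg * Ma * (sqrt T * s powr (-1/2))"
        using mult_left_mono[OF one, of "Eb * Rg * Dg * Ma"] Eb0 Rg0 Dg0 Ma(1) by simp
      finally show ?thesis .
    qed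
    have "\<bar>kd s\<bar> \<le> \<bar>\<kappa> s * (\<alpha>1 s * ln s + (\<alpha> s - 1) / s)\<bar> + \<bar>E s * ((- rGamma (\<alpha> s) * Digamma (\<alpha> s)) * \<alpha>1 s)\<bar>"
      unfolding kd_def e1 by (rule abs_triangle_ineq)
    also have "\<bar>\<kappa> s * (\<alpha>1 s * ln s + (\<alpha> s - 1) / s)\<bar> \<le> \<bar>\<kappa> s\<bar> * (\<bar>\<alpha>1 s * ln s\<bar> + \<bar>(\<alpha> s - 1) / s\<bar>)"
    proof -
      have t1: "\<bar>\<alpha>1 s * ln s + (\<alpha> s - 1) / s\<bar> \<le> \<bar>\<alpha>1 s * ln s\<bar> + \<bar>(\<alpha> s - 1) / s\<bar>" by (rule abs_triangle_ineq)
      have "\<bar>\<kappa> s * (\<alpha>1 s * ln s + (\<alpha> s - 1) / s)\<bar> = \<bar>\<kappa> s\<bar> * \<bar>\<alpha>1 s * ln s + (\<alpha> s - 1) / s\<bar>" by (rule abs_mult)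
      then show ?thesis by (simp only:) (rule mult_left_mono[OF t1 abs_ge_zero])
    qed
    finally have "\<bar>kd s\<bar> \<le> \<bar>\<kappa> s\<bar> * (\<bar>\<alpha>1 s * ln s\<bar> + \<bar>(\<alpha> s - 1) / s\<bar>) + \<bar>E s * ((- rGamma (\<alpha> s) * Digamma (\<alpha> s)) * \<alpha>1 s)\<bar>"
      by simp
    also have "\<dots> \<le> Mk * (Ma * (2 * (1 + T) * s powr (-1/2)) + Ma * (sqrt T * s powr (-1/2))) + Eb * Rg * Dg * Ma * (sqrt T * s powr (-1/2))"
      using Mk[OF sT] b1 b2 b3 Mk0 by (intro add_mono mult_mono) auto
    also have "\<dots> = Cb * s powr (-1/2)" unfolding Cb_def by (simp add: algebra_simps)
    finally show ?thesis .
  qed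
  have klip: "\<bar>\<kappa> x - \<kappa> y\<bar> \<le> Cb * (x - y) * y powr (-1/2)" if xy: "0 < y" "y \<le> x" "x \<le> T" for x y
  proof -
    have "norm (\<kappa> x - \<kappa> y) \<le> (Cb * y powr (-1/2)) * norm (x - y)"
    proof (rule field_differentiable_bound[where S="{y..x}" and f'=kd])
      fix z assume z: "z \<in> {y..x}"
      show "(\<kappa> has_field_derivative kd z) (at z within {y..x})"
        using DERIV_subset[OF kder[of z]] z xy by auto
      have "\<bar>kd z\<bar> \<le> Cb * z powr (-1/2)" using kdb[of z] z xy by auto
      also have "\<dots> \<le> Cb * y powr (-1/2)" using z xy Cb0 by (intro mult_left_mono powr_mono2') auto
      finally show "norm (kd z) \<le> Cb * y powr (-1/2)" by simp
    qed (use xy in auto)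
    then show ?thesis using xy by (simp add: mult_ac)
  qed
  show ?thesis using k_cont Mk Cb0 klip by blast
qed



theorem lemma3p3:
  fixes \<alpha> \<alpha>1 \<alpha>2 :: "real \<Rightarrow> real" and T \<zeta> :: real
  assumes T_pos: "T > 0" and zeta_pos: "\<zeta> > 0"
    and alpha_bounds: "\<exists>\<alpha>s>0. \<forall>t\<in>{0..T}. \<alpha>s \<le> \<alpha> t \<and> \<alpha> t \<le> 1"
    and alpha0: "\<alpha> 0 = 1"
    and d1: "\<forall>t\<in>{0..T}. (\<alpha> has_real_derivative \<alpha>1 t) (at t within {0..T})"
    and d2: "\<forall>t\<in>{0..T}. (\<alpha>1 has_real_derivative \<alpha>2 t) (at t within {0..T})"
    and d3: "\<exists>L. \<forall>s\<in>{0..T}. \<forall>t\<in>{0..T}. \<bar>\<alpha>2 s - \<alpha>2 t\<bar> \<le> L * \<bar>s - t\<bar>"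
  shows "\<exists>\<epsilon>0>0. \<forall>\<epsilon>. 0 \<le> \<epsilon> \<and> \<epsilon> \<le> \<epsilon>0 \<longrightarrow>
    (\<exists>Q. \<forall>(\<Omega>::(real^'n) set) (v::real^'n \<Rightarrow> real \<Rightarrow> real) x dw D1 D2 t.
       open \<Omega> \<and> bounded \<Omega> \<and> CARD('n) \<le> 3 \<and> x \<in> \<Omega>
       \<and> continuous_on {0..T} dw
       \<and> (\<forall>s\<in>{0..T}. ((\<lambda>r. laplacian (\<lambda>y. v y r) x) has_real_derivative dw s) (at s within {0..T}))
       \<and> (\<forall>s\<in>{0<..T}. ((\<lambda>r. \<zeta> * kconv \<alpha> (\<lambda>\<tau>. laplacian (\<lambda>y. v y \<tau>) x) r)
                             has_real_derivative D1 s) (at s within {0..T}))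
       \<and> t \<in> {0<..T}
       \<and> (RL_int (1 - \<epsilon>) D1 has_real_derivative D2) (at t within {0..T})
       \<longrightarrow> \<bar>D2\<bar> \<le> Q * integral {0..t} (\<lambda>s. \<bar>dw s\<bar> / (t - s) powr \<epsilon>)
                 + Q * \<bar>laplacian (\<lambda>y. v y 0) x\<bar> / t powr \<epsilon>)"
proof -
  obtain \<alpha>s where as: "0 < \<alpha>s" "\<forall>t\<in>{0..T}. \<alpha>s \<le> \<alpha> t \<and> \<alpha> t \<le> 1"
    using alpha_bounds by blast
  define \<kappa> where "\<kappa> \<equiv> \<lambda>s. exp ((\<alpha> s - 1) * ln s) * rGamma (\<alpha> s)"
  obtain Mk Ck where kc: "continuous_on {0..T} \<kappa>" and kb: "\<forall>s\<in>{0..T}. \<bar>\<kappa> s\<bar> \<le> Mk" and Ck: "0 \<le> Ck"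
    and kl: "\<forall>x y. 0 < y \<longrightarrow> y \<le> x \<longrightarrow> x \<le> T \<longrightarrow> \<bar>\<kappa> x - \<kappa> y\<bar> \<le> Ck * (x - y) * y powr (-1/2)"
    using kernel_props[OF T_pos as alpha0 d1 d2] unfolding \<kappa>_def by blast
  have Kk: "vo_kernel \<alpha> s = \<kappa> s" if "0 < s" for s
    using that by (simp add: vo_kernel_def \<kappa>_def powr_def rGamma_inverse_Gamma divide_inverse)
  show ?thesis
  proof (rule exI[of _ "1/4"], intro conjI allI impI)
    fix \<epsilon> :: real assume eps: "0 \<le> \<epsilon> \<and> \<epsilon> \<le> 1/4"
    define c where "c = 1 / Gamma (1 - \<epsilon>)"
    have c: "0 \<le> c" unfolding c_def using eps by (simp add: Gamma_real_pos less_imp_le)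
    show "\<exists>Q. \<forall>(\<Omega>::(real^'n) set) (v::real^'n \<Rightarrow> real \<Rightarrow> real) x dw D1 D2 t.
       open \<Omega> \<and> bounded \<Omega> \<and> CARD('n) \<le> 3 \<and> x \<in> \<Omega>
       \<and> continuous_on {0..T} dw
       \<and> (\<forall>s\<in>{0..T}. ((\<lambda>r. laplacian (\<lambda>y. v y r) x) has_real_derivative dw s) (at s within {0..T}))
       \<and> (\<forall>s\<in>{0<..T}. ((\<lambda>r. \<zeta> * kconv \<alpha> (\<lambda>\<tau>. laplacian (\<lambda>y. v y \<tau>) x) r)
                             has_real_derivative D1 s) (at s within {0..T}))
       \<and> t \<in> {0<..T}
       \<and> (RL_int (1 - \<epsilon>) D1 has_real_derivative D2) (at t within {0..T})
       \<longrightarrow> \<bar>D2\<bar> \<le> Q * integral {0..t} (\<lambda>s. \<bar>dw s\<bar> / (t - s) powr \<epsilon>)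
                 + Q * \<bar>laplacian (\<lambda>y. v y 0) x\<bar> / t powr \<epsilon>"
    proof (intro exI[of _ "c * \<zeta> * (Mk + 8 * Ck * sqrt T)"] allI impI)
      fix \<Omega> :: "(real^'n) set" and v :: "real^'n \<Rightarrow> real \<Rightarrow> real" and x dw D1 D2 t
      assume H: "open \<Omega> \<and> bounded \<Omega> \<and> CARD('n) \<le> 3 \<and> x \<in> \<Omega>
       \<and> continuous_on {0..T} dw
       \<and> (\<forall>s\<in>{0..T}. ((\<lambda>r. laplacian (\<lambda>y. v y r) x) has_real_derivative dw s) (at s within {0..T}))
       \<and> (\<forall>s\<in>{0<..T}. ((\<lambda>r. \<zeta> * kconv \<alpha> (\<lambda>\<tau>. laplacian (\<lambda>y. v y \<tau>) x) r)
                             has_real_derivative D1 s) (at s within {0..T}))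
       \<and> t \<in> {0<..T}
       \<and> (RL_int (1 - \<epsilon>) D1 has_real_derivative D2) (at t within {0..T})"
      define w where "w = (\<lambda>r. laplacian (\<lambda>y. v y r) x)"
      interpret S0 T \<epsilon> Mk Ck \<kappa> w dw
        by unfold_locales (use T_pos eps kc kb kl Ck H in \<open>auto simp: w_def\<close>)
      have t: "0 < t" "t \<le> T" using H by auto
      have D1der: "((\<lambda>r. \<zeta> * integral {0..r} (\<lambda>s. vo_kernel \<alpha> (r - s) * w s)) has_real_derivative D1 s) (at s within {0..T})"
        if "s \<in> {0<..T}" for s
        using H that by (simp add: kconv_def w_def)
      have RL: "RL_int (1 - \<epsilon>) D1 = (\<lambda>r. c * integral {0..r} (\<lambda>s. (r - s) powr (-\<epsilon>) * D1 s))"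
        by (rule ext) (simp add: RL_int_def c_def)
      have D2der: "((\<lambda>r. c * integral {0..r} (\<lambda>s. (r - s) powr (-\<epsilon>) * D1 s)) has_real_derivative D2) (at t within {0..T})"
        using H RL by simp
      have main: "\<bar>D2\<bar> \<le> c * \<zeta> * (Mk + 8 * Ck * sqrt T) * (Phi t + \<bar>w 0\<bar> * t powr (-\<epsilon>))"
        by (rule main_bound[OF t c less_imp_le[OF zeta_pos] _ D1der D2der]) (use Kk in auto)
      have PhiEq: "Phi t = integral {0..t} (\<lambda>s. \<bar>dw s\<bar> / (t - s) powr \<epsilon>)"
        unfolding Phi_def by (simp add: powr_minus_divide)
      have "t powr (-\<epsilon>) = 1 / t powr \<epsilon>" by (simp add: powr_minus_divide)
      then show "\<bar>D2\<bar> \<le> c * \<zeta> * (Mk + 8 * Ck * sqrt T) * integral {0..t} (\<lambda>s. \<bar>dw s\<bar> / (t - s) powr \<epsilon>)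
                 + c * \<zeta> * (Mk + 8 * Ck * sqrt T) * \<bar>laplacian (\<lambda>y. v y 0) x\<bar> / t powr \<epsilon>"
        using main unfolding PhiEq w_def by (simp add: powr_minus_divide distrib_left divide_inverse mult_ac)
    qed
  qed simp
qed

end
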